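(* The set of all polynomials of several variables with integer coefficients that have a rational solution (i.e. a zero in $\mathbb Q^n$) is recursive if and only if the set of all polynomials of several variables with integer coefficients that have only finitely many rational solutions is recursively enumerable. Equivalently, the first set is not recursive if and only if the second set is not recursively enumerable.
   Context: Polynomials $D\in\mathbb Z[x_1,\ldots,x_n]$ ($n\ge1$ arbitrary) are coded as natural numbers so that recursiveness and recursive enumerability of sets of them make sense; a rational solution of $D$ is a tuple $(x_1,\ldots,x_n)\in\mathbb Q^n$ with $D(x_1,\ldots,x_n)=0$. *)

theory Defs
  imports Complex_Main "HOL-Library.Nat_Bijection"
begin

datatype recf =
    Zero
  | Succ
  | Proj nat
  | Comp recf "recf list"
  | Prim recf recf
  | Mini recf

inductive rec_eval :: "recf \<Rightarrow> nat list \<Rightarrow> nat \<Rightarrow> bool" where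
  ev_zero: "rec_eval Zero xs 0"
| ev_succ: "rec_eval Succ (x # xs) (Suc x)"
| ev_proj: "i < length xs \<Longrightarrow> rec_eval (Proj i) xs (xs ! i)"
| ev_comp: "length ys = length gs \<Longrightarrow> (\<forall>i<length gs. rec_eval (gs ! i) xs (ys ! i))
            \<Longrightarrow> rec_eval f ys z \<Longrightarrow> rec_eval (Comp f gs) xs z"
| ev_prim0: "rec_eval f xs y \<Longrightarrow> rec_eval (Prim f g) (0 # xs) y"
| ev_primS: "rec_eval (Prim f g) (n # xs) y \<Longrightarrow> rec_eval g (n # y # xs) z
            \<Longrightarrow> rec_eval (Prim f g) (Suc n # xs) z"
| ev_mini: "rec_eval f (n # xs) 0 \<Longrightarrow> (\<forall>m<n. \<exists>y. rec_eval f (m # xs) y \<and> y > 0)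
            \<Longrightarrow> rec_eval (Mini f) xs n"

definition recursive_set :: "nat set \<Rightarrow> bool" where
  "recursive_set A \<longleftrightarrow> (\<exists>p. \<forall>k. rec_eval p [k] (if k \<in> A then 1 else 0))"

definition re_set :: "nat set \<Rightarrow> bool" where
  "re_set A \<longleftrightarrow> (\<exists>p. \<forall>k. k \<in> A \<longleftrightarrow> (\<exists>y. rec_eval p [k] y))"

text \<open>A polynomial in x_1..x_n is a list of monomials (c, [e_1,..,e_n]) meaning c * x_1^e_1 * ... * x_n^e_n.\<close>
type_synonym ipoly = "(int \<times> nat list) list"

definition ipoly_eval :: "ipoly \<Rightarrow> rat list \<Rightarrow> rat" where
  "ipoly_eval D xs = (\<Sum>(c, es)\<leftarrow>D. of_int c * (\<Prod>i<length xs. (xs ! i) ^ (es ! i)))"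

definition decode_poly :: "nat \<Rightarrow> nat \<times> ipoly" where
  "decode_poly k = (let (n, m) = prod_decode k in
     (n, map (\<lambda>j. let (a, b) = prod_decode j in (int_decode a, list_decode b)) (list_decode m)))"

definition valid_code :: "nat \<Rightarrow> bool" where
  "valid_code k \<longleftrightarrow> (let (n, D) = decode_poly k in n \<ge> 1 \<and> (\<forall>(c, es)\<in>set D. length es = n))"

definition rat_solutions :: "nat \<Rightarrow> rat list set" where
  "rat_solutions k = (let (n, D) = decode_poly k in {xs. length xs = n \<and> ipoly_eval D xs = 0})"

definition has_rat_solution_set :: "nat set" where
  "has_rat_solution_set = {k. valid_code k \<and> rat_solutions k \<noteq> {}}"

definition fin_rat_solutions_set :: "nat set" where
  "fin_rat_solutions_set = {k. valid_code k \<and> finite (rat_solutions k)}"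

end

theory Submission
  imports Defs
begin


definition rf :: "nat \<Rightarrow> (nat list \<Rightarrow> nat) \<Rightarrow> bool" where
  "rf m F \<longleftrightarrow> (\<exists>p. \<forall>xs. length xs = m \<longrightarrow> rec_eval p xs (F xs))"

lemma rf_cong: "rf m F \<Longrightarrow> (\<And>xs. length xs = m \<Longrightarrow> F xs = G xs) \<Longrightarrow> rf m G"
  unfolding rf_def by metis

lemma rf_zero: "rf m (\<lambda>_. 0)"
  unfolding rf_def by (auto intro: ev_zero)

lemma rf_proj: "i < m \<Longrightarrow> rf m (\<lambda>xs. xs ! i)"
  unfolding rf_def by (rule exI[of _ "Proj i"]) (auto intro: ev_proj)

lemma rf_succ1: "rf (Suc 0) (\<lambda>xs. Suc (xs ! 0))"
  unfolding rf_def
  apply (rule exI[of _ Succ])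
  apply clarify
  apply (case_tac xs)
   apply (auto intro: ev_succ)
  done

lemma progs_exist: "\<forall>g\<in>set Gs. rf m g \<Longrightarrow>
   \<exists>ps. length ps = length Gs \<and> (\<forall>i<length Gs. \<forall>xs. length xs = m \<longrightarrow> rec_eval (ps ! i) xs ((Gs ! i) xs))"
proof (induction Gs)
  case Nil then show ?case by simp
next
  case (Cons g Gs)
  then obtain ps where ps: "length ps = length Gs" "\<forall>i<length Gs. \<forall>xs. length xs = m \<longrightarrow> rec_eval (ps ! i) xs ((Gs ! i) xs)" by auto
  from Cons.prems obtain p where p: "\<forall>xs. length xs = m \<longrightarrow> rec_eval p xs (g xs)" unfolding rf_def by auto
  show ?case
    apply (rule exI[of _ "p # ps"])
    using ps p by (auto simp: nth_Cons split: nat.split)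
qed

lemma rf_comp: "rf (length Gs) F \<Longrightarrow> \<forall>g\<in>set Gs. rf m g \<Longrightarrow> rf m (\<lambda>xs. F (map (\<lambda>g. g xs) Gs))"
proof -
  assume F: "rf (length Gs) F" and G: "\<forall>g\<in>set Gs. rf m g"
  from F obtain f where f: "\<forall>ys. length ys = length Gs \<longrightarrow> rec_eval f ys (F ys)" unfolding rf_def by auto
  from progs_exist[OF G] obtain ps where ps: "length ps = length Gs" "\<forall>i<length Gs. \<forall>xs. length xs = m \<longrightarrow> rec_eval (ps ! i) xs ((Gs ! i) xs)" by auto
  show ?thesis unfolding rf_def
    apply (rule exI[of _ "Comp f ps"])
    apply clarify
    apply (rule ev_comp[where ys="map (\<lambda>g. g _) Gs"])
    using ps f by auto
qed

primrec PR :: "(nat list \<Rightarrow> nat) \<Rightarrow> (nat list \<Rightarrow> nat) \<Rightarrow> nat \<Rightarrow> nat list \<Rightarrow> nat" where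
  "PR F G 0 ys = F ys"
| "PR F G (Suc n) ys = G (n # PR F G n ys # ys)"

lemma rf_prim: "rf m F \<Longrightarrow> rf (Suc (Suc m)) G \<Longrightarrow> rf (Suc m) (\<lambda>xs. PR F G (hd xs) (tl xs))"
proof -
  assume F: "rf m F" and G: "rf (Suc (Suc m)) G"
  from F obtain f where f: "\<forall>ys. length ys = m \<longrightarrow> rec_eval f ys (F ys)" unfolding rf_def by auto
  from G obtain g where g: "\<forall>ys. length ys = Suc (Suc m) \<longrightarrow> rec_eval g ys (G ys)" unfolding rf_def by auto
  have "\<And>n ys. length ys = m \<Longrightarrow> rec_eval (Prim f g) (n # ys) (PR F G n ys)"
  proof -
    fix n :: nat and ys :: "nat list" assume l: "length ys = m"
    show "rec_eval (Prim f g) (n # ys) (PR F G n ys)"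
      by (induction n) (use f g l in \<open>auto intro: ev_prim0 ev_primS\<close>)
  qed
  then show ?thesis unfolding rf_def
    apply (rule_tac exI[of _ "Prim f g"])
    apply clarify
    apply (case_tac xs)
     apply auto
    done
qed

lemma rf_mini: "rf (Suc m) F \<Longrightarrow> (\<And>ys. length ys = m \<Longrightarrow> \<exists>n. F (n # ys) = 0) \<Longrightarrow>
   rf m (\<lambda>ys. LEAST n. F (n # ys) = 0)"
proof -
  assume F: "rf (Suc m) F" and ex: "\<And>ys. length ys = m \<Longrightarrow> \<exists>n. F (n # ys) = 0"
  from F obtain f where f: "\<forall>ys. length ys = Suc m \<longrightarrow> rec_eval f ys (F ys)" unfolding rf_def by auto
  show ?thesis unfolding rf_def
  proof (rule exI[of _ "Mini f"], intro allI impI)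
    fix ys :: "nat list" assume l: "length ys = m"
    from ex[OF l] have e: "F ((LEAST n. F (n # ys) = 0) # ys) = 0" by (rule LeastI_ex)
    have h: "\<forall>k<(LEAST n. F (n # ys) = 0). \<exists>y. rec_eval f (k # ys) y \<and> y > 0"
    proof (intro allI impI)
      fix k assume "k < (LEAST n. F (n # ys) = 0)"
      then have "F (k # ys) \<noteq> 0" by (rule not_less_Least)
      moreover have "rec_eval f (k # ys) (F (k # ys))" using f l by simp
      ultimately show "\<exists>y. rec_eval f (k # ys) y \<and> y > 0" by blast
    qed
    have h2: "rec_eval f ((LEAST n. F (n # ys) = 0) # ys) 0" using f l e by (metis length_Cons)
    show "rec_eval (Mini f) ys (LEAST n. F (n # ys) = 0)"
      by (rule ev_mini[OF h2 h])
  qed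
qed

lemma rf_comp1: "rf (Suc 0) H \<Longrightarrow> rf m f \<Longrightarrow> rf m (\<lambda>xs. H [f xs])"
  using rf_comp[of "[f]" H m] by simp
lemma rf_comp2: "rf (Suc (Suc 0)) H \<Longrightarrow> rf m f \<Longrightarrow> rf m g \<Longrightarrow> rf m (\<lambda>xs. H [f xs, g xs])"
  using rf_comp[of "[f,g]" H m] by simp
lemma rf_comp3: "rf (Suc (Suc (Suc 0))) H \<Longrightarrow> rf m f \<Longrightarrow> rf m g \<Longrightarrow> rf m h \<Longrightarrow> rf m (\<lambda>xs. H [f xs, g xs, h xs])"
  using rf_comp[of "[f,g,h]" H m] by simp

lemma rf_compL: "rf (length Gs) F \<Longrightarrow> \<forall>g\<in>set Gs. rf m g \<Longrightarrow> (\<And>xs. length xs = m \<Longrightarrow> F (map (\<lambda>g. g xs) Gs) = H xs) \<Longrightarrow> rf m H"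
  by (rule rf_cong[OF rf_comp]) auto

named_theorems rfI

lemma rf_const[rfI]: "rf m (\<lambda>_. c)"
proof (induction c)
  case 0 then show ?case by (rule rf_zero)
next
  case (Suc c)
  from rf_comp1[OF rf_succ1 this] show ?case by simp
qed

lemma rf_nth[rfI]: "i < m \<Longrightarrow> rf m (\<lambda>xs. xs ! i)" by (rule rf_proj)
lemma rf_id0[rfI]: "rf (Suc m) (\<lambda>xs. hd xs)"
  by (rule rf_cong[OF rf_proj[of 0]]) (auto, case_tac xs, auto)

lemma rf_Suc[rfI]: "rf m f \<Longrightarrow> rf m (\<lambda>xs. Suc (f xs))"
  using rf_comp1[OF rf_succ1] by simp

lemma PR_pred: "PR (\<lambda>_. 0) (\<lambda>ys. ys ! 0) n ys = n - 1"
  by (cases n) auto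

lemma rf_pred0: "rf (Suc 0) (\<lambda>xs. xs ! 0 - 1)"
proof -
  have "rf (Suc 0) (\<lambda>xs. PR (\<lambda>_. 0) (\<lambda>ys. ys ! 0) (hd xs) (tl xs))"
    by (rule rf_prim) (auto intro: rf_const rf_proj)
  then show ?thesis
    apply (rule rf_cong)
    subgoal for xs by (cases xs) (auto simp: PR_pred)
    done
qed

lemma rf_pred[rfI]: "rf m f \<Longrightarrow> rf m (\<lambda>xs. f xs - 1)"
  using rf_comp1[OF rf_pred0] by simp

lemma PR_add: "PR (\<lambda>ys. ys ! 0) (\<lambda>ys. Suc (ys ! Suc 0)) n ys = n + ys ! 0"
  by (induction n) auto

lemma rf_add0: "rf (Suc (Suc 0)) (\<lambda>xs. xs ! 0 + xs ! 1)"
proof -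
  have "rf (Suc (Suc 0)) (\<lambda>xs. PR (\<lambda>ys. ys ! 0) (\<lambda>ys. Suc (ys ! Suc 0)) (hd xs) (tl xs))"
    by (rule rf_prim) (auto intro: rf_Suc rf_proj)
  then show ?thesis
    apply (rule rf_cong)
    subgoal for xs by (cases xs) (auto simp: PR_add nth_tl)
    done
qed

lemma rf_add[rfI]: "rf m f \<Longrightarrow> rf m g \<Longrightarrow> rf m (\<lambda>xs. f xs + g xs)"
  using rf_comp2[OF rf_add0] by simp


lemma rf1I: "rf (Suc 0) (\<lambda>v. h (v!0)) \<Longrightarrow> rf m f \<Longrightarrow> rf m (\<lambda>xs. h (f xs))"
  using rf_comp1[of "\<lambda>v. h (v!0)" m f] by simp
lemma rf2I: "rf (Suc (Suc 0)) (\<lambda>v. h (v!0) (v!Suc 0)) \<Longrightarrow> rf m f \<Longrightarrow> rf m g \<Longrightarrow> rf m (\<lambda>xs. h (f xs) (g xs))"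
  using rf_comp2[of "\<lambda>v. h (v!0) (v!Suc 0)" m f g] by simp
lemma rf3I: "rf (Suc (Suc (Suc 0))) (\<lambda>v. h (v!0) (v!Suc 0) (v!Suc (Suc 0))) \<Longrightarrow> rf m f \<Longrightarrow> rf m g \<Longrightarrow> rf m k \<Longrightarrow> rf m (\<lambda>xs. h (f xs) (g xs) (k xs))"
  using rf_comp3[of "\<lambda>v. h (v!0) (v!Suc 0) (v!Suc (Suc 0))" m f g k] by simp

lemma rf_PRc: "rf m F \<Longrightarrow> rf (Suc (Suc m)) G \<Longrightarrow> rf k N \<Longrightarrow> \<forall>a\<in>set As. rf k a \<Longrightarrow> length As = m
  \<Longrightarrow> rf k (\<lambda>xs. PR F G (N xs) (map (\<lambda>a. a xs) As))"
proof -
  assume a: "rf m F" "rf (Suc (Suc m)) G" "rf k N" "\<forall>a\<in>set As. rf k a" "length As = m"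
  have "rf (Suc m) (\<lambda>v. PR F G (hd v) (tl v))" by (rule rf_prim[OF a(1,2)])
  then have "rf k (\<lambda>xs. (\<lambda>v. PR F G (hd v) (tl v)) (map (\<lambda>g. g xs) (N # As)))"
    by (intro rf_comp) (use a in auto)
  then show ?thesis by simp
qed

lemma rf_pred'[rfI]: "rf m f \<Longrightarrow> rf m (\<lambda>xs. f xs - Suc 0)"
  using rf_pred[of m f] by simp

lemma PR_sub: "PR (\<lambda>ys. ys!0) (\<lambda>ys. ys!Suc 0 - Suc 0) n [a] = a - n"
  by (induction n) auto
lemma rf_sub[rfI]: "rf m f \<Longrightarrow> rf m g \<Longrightarrow> rf m (\<lambda>xs. f xs - g xs)"
proof (rule rf2I[where h="(-)"])
  have "rf (Suc (Suc 0)) (\<lambda>xs. PR (\<lambda>ys. ys!0) (\<lambda>ys. ys!Suc 0 - 1) (xs!Suc 0) (map (\<lambda>a. a xs) [\<lambda>v. v!0]))"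
    by (rule rf_PRc) (auto intro!: rfI rf_pred)
  then show "rf (Suc (Suc 0)) (\<lambda>v. v ! 0 - v ! Suc 0)" by (simp add: PR_sub)
qed

lemma PR_mul: "PR (\<lambda>_. 0) (\<lambda>ys. ys!Suc 0 + ys!Suc (Suc 0)) n [b] = n * b"
  by (induction n) auto
lemma rf_mul[rfI]: "rf m f \<Longrightarrow> rf m g \<Longrightarrow> rf m (\<lambda>xs. f xs * g xs)"
proof (rule rf2I[where h="(*)"])
  have "rf (Suc (Suc 0)) (\<lambda>xs. PR (\<lambda>_. 0) (\<lambda>ys. ys!Suc 0 + ys!Suc (Suc 0)) (xs!0) (map (\<lambda>a. a xs) [\<lambda>v. v!Suc 0]))"
    by (rule rf_PRc) (auto intro!: rfI)
  then show "rf (Suc (Suc 0)) (\<lambda>v. v ! 0 * v ! Suc 0)" by (simp add: PR_mul)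
qed

lemma PR_ifz: "PR (\<lambda>ys. ys!0) (\<lambda>ys. ys!Suc (Suc (Suc 0))) n [a, b] = (if n = 0 then a else b)"
  by (induction n) auto
lemma rf_ifz: "rf m c \<Longrightarrow> rf m f \<Longrightarrow> rf m g \<Longrightarrow> rf m (\<lambda>xs. if c xs = 0 then f xs else g xs)"
proof (rule rf3I[where h="\<lambda>c a b. if c = 0 then a else b"])
  have "rf (Suc (Suc (Suc 0))) (\<lambda>xs. PR (\<lambda>ys. ys!0) (\<lambda>ys. ys!Suc (Suc (Suc 0))) (xs!0) (map (\<lambda>a. a xs) [\<lambda>v. v!Suc 0, \<lambda>v. v!Suc (Suc 0)]))"
    by (rule rf_PRc) (auto intro!: rfI)
  then show "rf (Suc (Suc (Suc 0))) (\<lambda>v. if v ! 0 = 0 then v ! Suc 0 else v ! Suc (Suc 0))" by (simp add: PR_ifz)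
qed

definition rp :: "nat \<Rightarrow> (nat list \<Rightarrow> bool) \<Rightarrow> bool" where
  "rp m P \<longleftrightarrow> rf m (\<lambda>xs. if P xs then 1 else 0)"

lemma rf_if[rfI]: "rp m P \<Longrightarrow> rf m f \<Longrightarrow> rf m g \<Longrightarrow> rf m (\<lambda>xs. if P xs then f xs else g xs)"
  unfolding rp_def
  by (rule rf_cong[OF rf_ifz[of m "\<lambda>xs. if P xs then 1 else 0" g f]]) auto

lemma rp_eq[rfI]: "rf m f \<Longrightarrow> rf m g \<Longrightarrow> rp m (\<lambda>xs. f xs = g xs)"
  unfolding rp_def
  by (rule rf_cong[of m "\<lambda>xs. 1 - ((f xs - g xs) + (g xs - f xs))"]) (auto intro!: rfI)

lemma rp_less[rfI]: "rf m f \<Longrightarrow> rf m g \<Longrightarrow> rp m (\<lambda>xs. f xs < g xs)"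
  unfolding rp_def
  by (rule rf_cong[of m "\<lambda>xs. 1 - (1 - (g xs - f xs))"]) (auto intro!: rfI)

lemma rp_le[rfI]: "rf m f \<Longrightarrow> rf m g \<Longrightarrow> rp m (\<lambda>xs. f xs \<le> g xs)"
  using rp_less[of m f "\<lambda>xs. Suc (g xs)"] by (simp add: less_Suc_eq_le rf_Suc)

lemma rp_not[rfI]: "rp m P \<Longrightarrow> rp m (\<lambda>xs. \<not> P xs)"
  unfolding rp_def
  by (rule rf_cong[of m "\<lambda>xs. 1 - (if P xs then 1 else 0)"]) (auto intro!: rfI simp: rp_def)

lemma rp_and[rfI]: "rp m P \<Longrightarrow> rp m Q \<Longrightarrow> rp m (\<lambda>xs. P xs \<and> Q xs)"
  unfolding rp_def
  by (rule rf_cong[of m "\<lambda>xs. (if P xs then 1 else 0) * (if Q xs then 1 else 0)"]) (auto intro!: rfI simp: rp_def)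

lemma rp_or[rfI]: "rp m P \<Longrightarrow> rp m Q \<Longrightarrow> rp m (\<lambda>xs. P xs \<or> Q xs)"
  using rp_not[OF rp_and[OF rp_not rp_not], of m P Q] by simp

lemma rp_imp[rfI]: "rp m P \<Longrightarrow> rp m Q \<Longrightarrow> rp m (\<lambda>xs. P xs \<longrightarrow> Q xs)"
  using rp_or[OF rp_not, of m P Q] by simp

lemma rp_const[rfI]: "rp m (\<lambda>_. b)"
  unfolding rp_def by (cases b) (auto intro: rfI)

lemma PR_even: "PR (\<lambda>_. Suc 0) (\<lambda>ys. Suc 0 - ys!Suc 0) n [] = (if even n then 1 else 0)"
  by (induction n) auto
lemma rp_even[rfI]: "rf m f \<Longrightarrow> rp m (\<lambda>xs. even (f xs))"
  unfolding rp_def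
proof (rule rf1I[where h="\<lambda>n. if even n then 1 else 0"])
  have "rf (Suc 0) (\<lambda>xs. PR (\<lambda>_. Suc 0) (\<lambda>ys. Suc 0 - ys!Suc 0) (xs!0) (map (\<lambda>a. a xs) []))"
    by (rule rf_PRc) (auto intro!: rfI)
  then show "rf (Suc 0) (\<lambda>v. if even (v ! 0) then 1 else 0)" by (simp add: PR_even)
qed

lemma PR_div2: "PR (\<lambda>_. 0) (\<lambda>ys. ys!Suc 0 + (if even (ys!0) then 0 else 1)) n [] = n div 2"
  by (induction n) auto
lemma rf_div2[rfI]: "rf m f \<Longrightarrow> rf m (\<lambda>xs. f xs div 2)"
proof (rule rf1I[where h="\<lambda>n. n div 2"])
  have "rf (Suc 0) (\<lambda>xs. PR (\<lambda>_. 0) (\<lambda>ys. ys!Suc 0 + (if even (ys!0) then 0 else 1)) (xs!0) (map (\<lambda>a. a xs) []))"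
    by (rule rf_PRc) (auto intro!: rfI)
  then show "rf (Suc 0) (\<lambda>v. v ! 0 div 2)" by (simp add: PR_div2)
qed

lemma PR_tri: "PR (\<lambda>_. 0) (\<lambda>ys. Suc (ys!Suc 0 + ys!0)) n [] = triangle n"
  by (induction n) auto
lemma rf_triangle[rfI]: "rf m f \<Longrightarrow> rf m (\<lambda>xs. triangle (f xs))"
proof (rule rf1I[where h="triangle"])
  have "rf (Suc 0) (\<lambda>xs. PR (\<lambda>_. 0) (\<lambda>ys. Suc (ys!Suc 0 + ys!0)) (xs!0) (map (\<lambda>a. a xs) []))"
    by (rule rf_PRc) (auto intro!: rfI)
  then show "rf (Suc 0) (\<lambda>v. triangle (v ! 0))" by (simp add: PR_tri)
qed

lemma PR_pow: "PR (\<lambda>_. Suc 0) (\<lambda>ys. ys!Suc 0 * ys!Suc (Suc 0)) n [b] = b ^ n"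
  by (induction n) auto
lemma rf_pow[rfI]: "rf m f \<Longrightarrow> rf m g \<Longrightarrow> rf m (\<lambda>xs. f xs ^ g xs)"
proof (rule rf2I[where h="\<lambda>a b. a ^ b"])
  have "rf (Suc (Suc 0)) (\<lambda>xs. PR (\<lambda>_. Suc 0) (\<lambda>ys. ys!Suc 0 * ys!Suc (Suc 0)) (xs!Suc 0) (map (\<lambda>a. a xs) [\<lambda>v. v!0]))"
    by (rule rf_PRc) (auto intro!: rfI)
  then show "rf (Suc (Suc 0)) (\<lambda>v. v ! 0 ^ v ! Suc 0)" by (simp add: PR_pow)
qed

lemma rf_pe[rfI]: "rf m f \<Longrightarrow> rf m g \<Longrightarrow> rf m (\<lambda>xs. prod_encode (f xs, g xs))"
  unfolding prod_encode_def by (auto intro!: rfI)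

definition pdl :: "nat \<Rightarrow> nat" where "pdl k = (LEAST s. k < triangle (Suc s))"

lemma pdl_ex: "k < triangle (Suc k)"
  by (induction k) auto

lemma pdl_props: "k < triangle (Suc (pdl k))" "triangle (pdl k) \<le> k"
proof -
  show a: "k < triangle (Suc (pdl k))" unfolding pdl_def by (rule LeastI[of _ k]) (rule pdl_ex)
  show "triangle (pdl k) \<le> k"
  proof (cases "pdl k")
    case 0 then show ?thesis by simp
  next
    case (Suc s)
    then have "s < pdl k" by simp
    then have "\<not> k < triangle (Suc s)" unfolding pdl_def by (rule not_less_Least)
    then show ?thesis using Suc by simp
  qed
qed

lemma prod_decode_pdl: "prod_decode k = (k - triangle (pdl k), pdl k - (k - triangle (pdl k)))"
proof -
  let ?a = "k - triangle (pdl k)" and ?b = "pdl k - (k - triangle (pdl k))"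
  have "prod_encode (?a, ?b) = k" using pdl_props[of k] unfolding prod_encode_def
    by (simp add: le_add_diff_inverse)
  then show ?thesis by (metis prod_encode_inverse)
qed

lemma rf_pdl0: "rf (Suc 0) (\<lambda>v. pdl (v!0))"
proof -
  let ?F = "\<lambda>v::nat list. if v!Suc 0 < triangle (Suc (v!0)) then 0 else (1::nat)"
  have a: "rf (Suc (Suc 0)) ?F" by (auto intro!: rfI)
  have b: "\<exists>n. ?F (n#ys) = 0" if "length ys = Suc 0" for ys
    using pdl_ex[of "ys!0"] by (intro exI[of _ "ys ! 0"]) simp
  from rf_mini[OF a b] have "rf (Suc 0) (\<lambda>ys. LEAST n. ?F (n # ys) = 0)" .
  then show ?thesis by (rule rf_cong) (simp add: pdl_def)
qed

lemma rf_pdl[rfI]: "rf m f \<Longrightarrow> rf m (\<lambda>xs. pdl (f xs))"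
  by (rule rf1I[OF rf_pdl0])

lemma rf_fst_pd[rfI]: "rf m f \<Longrightarrow> rf m (\<lambda>xs. fst (prod_decode (f xs)))"
  unfolding prod_decode_pdl by (auto intro!: rfI)
lemma rf_snd_pd[rfI]: "rf m f \<Longrightarrow> rf m (\<lambda>xs. snd (prod_decode (f xs)))"
  unfolding prod_decode_pdl by (auto intro!: rfI)


primrec bmin :: "(nat \<Rightarrow> bool) \<Rightarrow> nat \<Rightarrow> nat" where
  "bmin P 0 = 0"
| "bmin P (Suc n) = (if bmin P n < n then bmin P n else if P n then n else Suc n)"

declare bmin.simps(2)[simp del]

lemma bmin_spec: "(bmin P n < n \<and> P (bmin P n) \<and> (\<forall>k<bmin P n. \<not> P k)) \<or> (bmin P n = n \<and> (\<forall>k<n. \<not> P k))"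
proof (induction n)
  case 0 then show ?case by simp
next
  case (Suc n)
  then show ?case
  proof
    assume a: "bmin P n < n \<and> P (bmin P n) \<and> (\<forall>k<bmin P n. \<not> P k)"
    then have "bmin P (Suc n) = bmin P n" by (simp add: bmin.simps)
    then show ?thesis using a by simp
  next
    assume a: "bmin P n = n \<and> (\<forall>k<n. \<not> P k)"
    show ?thesis
    proof (cases "P n")
      case True
      then have "bmin P (Suc n) = n" using a by (simp add: bmin.simps)
      then show ?thesis using a True by simp
    next
      case False
      then have "bmin P (Suc n) = Suc n" using a by (simp add: bmin.simps)
      moreover have "\<forall>k<Suc n. \<not> P k" using a False less_Suc_eq by auto
      ultimately show ?thesis by simp
    qed
  qed
qed

lemma bmin_is: "m < n \<Longrightarrow> P m \<Longrightarrow> (\<forall>k<m. \<not> P k) \<Longrightarrow> bmin P n = m"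
  using bmin_spec[of P n] by (metis linorder_neqE_nat)

lemma bmin_props: "bmin P n < n \<Longrightarrow> P (bmin P n) \<and> (\<forall>k<bmin P n. \<not> P k)"
  using bmin_spec[of P n] by auto

primrec clk :: "recf \<Rightarrow> nat \<Rightarrow> nat list \<Rightarrow> nat" where
  "clk Zero = (\<lambda>s xs. 1)"
| "clk Succ = (\<lambda>s xs. case xs of [] \<Rightarrow> 0 | x # _ \<Rightarrow> Suc (Suc x))"
| "clk (Proj i) = (\<lambda>s xs. if i < length xs then Suc (xs ! i) else 0)"
| "clk (Comp f gs) = (\<lambda>s xs. if (\<exists>c\<in>set (map clk gs). c s xs = 0) then 0
      else clk f s (map (\<lambda>c. c s xs - 1) (map clk gs)))"
| "clk (Prim f g) = (\<lambda>s xs. case xs of [] \<Rightarrow> 0 | n # ys \<Rightarrow>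
      rec_nat (clk f s ys) (\<lambda>i r. if r = 0 then 0 else clk g s (i # (r - 1) # ys)) n)"
| "clk (Mini f) = (\<lambda>s xs. let m0 = bmin (\<lambda>m. clk f s (m # xs) \<le> 1) (Suc s) in
      if m0 \<le> s \<and> clk f s (m0 # xs) = 1 then Suc m0 else 0)"

lemma clk_mono: "clk p s xs = Suc y \<Longrightarrow> s \<le> t \<Longrightarrow> clk p t xs = Suc y"
proof (induction p arbitrary: s t xs y)
  case Zero then show ?case by simp
next
  case Succ then show ?case by simp
next
  case (Proj i) then show ?case by simp
next
  case (Comp f gs)
  from Comp.prems have nz: "\<forall>g\<in>set gs. clk g s xs \<noteq> 0" by (auto split: if_splits)
  have eq: "\<forall>g\<in>set gs. clk g t xs = clk g s xs"
  proof
    fix g assume g: "g \<in> set gs"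
    then obtain z where z: "clk g s xs = Suc z" using nz not0_implies_Suc by blast
    from Comp.IH(2)[OF g z Comp.prems(2)] show "clk g t xs = clk g s xs" using z by simp
  qed
  then have m: "map (\<lambda>g. clk g t xs - 1) gs = map (\<lambda>g. clk g s xs - 1) gs" by simp
  have nz2: "\<not> (\<exists>c\<in>set (map clk gs). c t xs = 0)" using nz eq by simp
  have nz1: "\<not> (\<exists>c\<in>set (map clk gs). c s xs = 0)" using nz by simp
  have "clk (Comp f gs) s xs = clk f s (map (\<lambda>c. c s xs - 1) (map clk gs))"
    using nz1 by (simp only: clk.simps if_False)
  then have fs: "clk f s (map (\<lambda>g. clk g s xs - 1) gs) = Suc y"
    using Comp.prems(1) by (simp add: comp_def)
  have "clk (Comp f gs) t xs = clk f t (map (\<lambda>c. c t xs - 1) (map clk gs))"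
    using nz2 by (simp only: clk.simps if_False)
  also have "\<dots> = clk f t (map (\<lambda>g. clk g t xs - 1) gs)" by (simp add: comp_def)
  also have "\<dots> = Suc y" unfolding m by (rule Comp.IH(1)[OF fs Comp.prems(2)])
  finally show ?case .
next
  case (Prim f g)
  show ?case
  proof (cases xs)
    case Nil then show ?thesis using Prim.prems(1) by simp
  next
    case (Cons n ys)
    have "rec_nat (clk f s ys) (\<lambda>i r. if r = 0 then 0 else clk g s (i # (r - 1) # ys)) n = Suc y \<Longrightarrow>
          rec_nat (clk f t ys) (\<lambda>i r. if r = 0 then 0 else clk g t (i # (r - 1) # ys)) n = Suc y" for y
    proof (induction n arbitrary: y)
      case 0
      then have "clk f s ys = Suc y" by simp
      from Prim.IH(1)[OF this Prim.prems(2)] show ?case by simp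
    next
      case (Suc n)
      let ?r = "rec_nat (clk f s ys) (\<lambda>i r. if r = 0 then 0 else clk g s (i # (r - 1) # ys)) n"
      from Suc.prems have "?r \<noteq> 0" by (auto split: if_splits)
      then obtain z where z: "?r = Suc z" using not0_implies_Suc by blast
      with Suc.IH have "rec_nat (clk f t ys) (\<lambda>i r. if r = 0 then 0 else clk g t (i # (r - 1) # ys)) n = Suc z" .
      moreover have gs: "clk g s (n # z # ys) = Suc y" using Suc.prems z by simp
      note Prim.IH(2)[OF gs Prim.prems(2)]
      ultimately show ?case by simp
    qed
    then show ?thesis using Prim.prems Cons by simp
  qed
next
  case (Mini f)
  let ?P = "\<lambda>s m. clk f s (m # xs) \<le> 1"
  let ?m0 = "bmin (?P s) (Suc s)"
  from Mini.prems have h: "?m0 \<le> s" "clk f s (?m0 # xs) = 1" "y = ?m0"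
    by (auto simp: Let_def split: if_splits)
  then have lt: "?m0 < Suc s" by simp
  from bmin_props[OF lt] have below: "\<forall>k<?m0. \<not> ?P s k" by blast
  have h2: "clk f s (?m0 # xs) = Suc 0" using h(2) by simp
  have a: "clk f t (?m0 # xs) = 1" using Mini.IH[OF h2 Mini.prems(2)] by simp
  have b: "\<forall>k<?m0. \<not> ?P t k"
  proof (intro allI impI)
    fix k assume k: "k < ?m0"
    then have "clk f s (k # xs) > 1" using below not_le by blast
    then obtain z where z: "clk f s (k # xs) = Suc z" "z > 0" by (cases "clk f s (k # xs)") auto
    have "clk f t (k # xs) = Suc z" by (rule Mini.IH[OF z(1) Mini.prems(2)])
    then show "\<not> ?P t k" using z(2) by simp
  qed
  have lt2: "?m0 < Suc t" using h(1) Mini.prems(2) by simp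
  have bt: "bmin (?P t) (Suc t) = ?m0"
    by (rule bmin_is[OF lt2]) (use a b in auto)
  have c: "?m0 \<le> t \<and> clk f t (?m0 # xs) = 1" using a lt2 by simp
  have "clk (Mini f) t xs = (if ?m0 \<le> t \<and> clk f t (?m0 # xs) = 1 then Suc ?m0 else 0)"
    by (simp only: clk.simps Let_def bt)
  then show ?case using c h(3) by simp
qed

lemma clk_sound: "clk p s xs = Suc y \<Longrightarrow> rec_eval p xs y"
proof (induction p arbitrary: xs y)
  case Zero then show ?case by (auto intro: ev_zero)
next
  case Succ then show ?case by (auto split: list.splits intro: ev_succ)
next
  case (Proj i) then show ?case by (auto split: if_splits intro: ev_proj)
next
  case (Comp f gs)
  from Comp.prems have nz: "\<forall>g\<in>set gs. clk g s xs \<noteq> 0" by (auto split: if_splits)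
  let ?ys = "map (\<lambda>g. clk g s xs - 1) gs"
  have fy: "clk f s ?ys = Suc y" using Comp.prems nz by (auto split: if_splits simp: comp_def)
  show ?case
  proof (rule ev_comp[of ?ys])
    show "length ?ys = length gs" by simp
    show "\<forall>i<length gs. rec_eval (gs ! i) xs (?ys ! i)"
    proof (intro allI impI)
      fix i assume i: "i < length gs"
      then have g: "gs ! i \<in> set gs" by simp
      then have "clk (gs ! i) s xs = Suc (?ys ! i)" using nz i by simp
      then show "rec_eval (gs ! i) xs (?ys ! i)" using Comp.IH(2)[OF g] by blast
    qed
    show "rec_eval f ?ys y" using Comp.IH(1) fy by blast
  qed
next
  case (Prim f g)
  then obtain n ys where xs: "xs = n # ys" by (cases xs) auto
  have "rec_nat (clk f s ys) (\<lambda>i r. if r = 0 then 0 else clk g s (i # (r - 1) # ys)) n = Suc y \<Longrightarrow>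
        rec_eval (Prim f g) (n # ys) y" for y
  proof (induction n arbitrary: y)
    case 0 then show ?case using Prim.IH(1) by (auto intro: ev_prim0)
  next
    case (Suc n)
    let ?r = "rec_nat (clk f s ys) (\<lambda>i r. if r = 0 then 0 else clk g s (i # (r - 1) # ys)) n"
    from Suc.prems have "?r \<noteq> 0" by (auto split: if_splits)
    then obtain z where z: "?r = Suc z" using not0_implies_Suc by blast
    then have "rec_eval (Prim f g) (n # ys) z" using Suc.IH by blast
    moreover have "rec_eval g (n # z # ys) y" using Suc.prems z Prim.IH(2) by auto
    ultimately show ?case by (rule ev_primS)
  qed
  then show ?case using Prim.prems xs by simp
next
  case (Mini f)
  let ?P = "\<lambda>m. clk f s (m # xs) \<le> 1"
  let ?m0 = "bmin ?P (Suc s)"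
  from Mini.prems have h: "?m0 \<le> s" "clk f s (?m0 # xs) = 1" "y = ?m0"
    by (auto simp: Let_def split: if_splits)
  then have lt: "?m0 < Suc s" by simp
  from bmin_props[OF lt] have below: "\<forall>k<?m0. \<not> ?P k" by blast
  show ?case unfolding h(3)
  proof (rule ev_mini)
    show "rec_eval f (?m0 # xs) 0" using Mini.IH h(2) by simp
    show "\<forall>m<?m0. \<exists>y. rec_eval f (m # xs) y \<and> 0 < y"
    proof (intro allI impI)
      fix k assume k: "k < ?m0"
      then have "clk f s (k # xs) > 1" using below not_le by blast
      then obtain z where "clk f s (k # xs) = Suc z" "z > 0" by (cases "clk f s (k # xs)") auto
      then show "\<exists>y. rec_eval f (k # xs) y \<and> 0 < y" using Mini.IH by blast
    qed
  qed
qed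

lemma common_clock: "(\<forall>i<(n::nat). \<exists>s::nat. \<forall>t\<ge>s. P i t) \<Longrightarrow> \<exists>s. \<forall>i<n. \<forall>t\<ge>s. P i t"
proof (induction n)
  case 0 then show ?case by simp
next
  case (Suc n)
  then obtain s1 where s1: "\<forall>i<n. \<forall>t\<ge>s1. P i t" by auto
  from Suc.prems obtain s2 where s2: "\<forall>t\<ge>s2. P n t" by auto
  show ?case
    by (rule exI[of _ "max s1 s2"]) (use s1 s2 in \<open>auto simp: less_Suc_eq\<close>)
qed

lemma clk_complete: "rec_eval p xs y \<Longrightarrow> \<exists>s. clk p s xs = Suc y"
proof (induction rule: rec_eval.induct)
  case (ev_zero xs) then show ?case by simp
next
  case (ev_succ x xs) then show ?case by simp
next
  case (ev_proj i xs) then show ?case by simp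
next
  case (ev_comp ys gs xs f z)
  have "\<forall>i<length gs. \<exists>s. \<forall>t\<ge>s. clk (gs ! i) t xs = Suc (ys ! i)"
  proof (intro allI impI)
    fix i assume i: "i < length gs"
    with ev_comp(3) obtain s where s: "clk (gs ! i) s xs = Suc (ys ! i)" by blast
    show "\<exists>s. \<forall>t\<ge>s. clk (gs ! i) t xs = Suc (ys ! i)"
      by (rule exI[of _ s]) (use clk_mono[OF s] in blast)
  qed
  from common_clock[of "length gs" "\<lambda>i t. clk (gs ! i) t xs = Suc (ys ! i)", OF this]
  obtain s1 where s1: "\<forall>i<length gs. \<forall>t\<ge>s1. clk (gs ! i) t xs = Suc (ys ! i)" by blast
  obtain s2 where s2: "clk f s2 ys = Suc z" using ev_comp(4) by blast
  let ?s = "max s1 s2"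
  have m: "map (\<lambda>g. clk g ?s xs) gs = map Suc ys"
    by (rule nth_equalityI) (use s1 ev_comp(1) in auto)
  have nz0: "\<forall>g\<in>set gs. clk g ?s xs \<noteq> 0"
  proof
    fix g assume "g \<in> set gs"
    then obtain i where i: "i < length gs" "gs ! i = g" by (auto simp: in_set_conv_nth)
    then show "clk g ?s xs \<noteq> 0" using s1 by auto
  qed
  then have nz: "\<not> (\<exists>c\<in>set (map clk gs). c ?s xs = 0)" by simp
  have m2: "map (\<lambda>g. clk g ?s xs - 1) gs = ys"
    using arg_cong[OF m, of "map (\<lambda>x. x - 1)"] by (simp add: comp_def)
  have "clk (Comp f gs) ?s xs = clk f ?s (map (\<lambda>c. c ?s xs - 1) (map clk gs))"
    using nz by (simp only: clk.simps if_False)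
  also have "\<dots> = clk f ?s ys" using m2 by (simp add: comp_def)
  also have "\<dots> = Suc z" using clk_mono[OF s2] by simp
  finally show ?case by blast
next
  case (ev_prim0 f xs y g)
  then obtain s where "clk f s xs = Suc y" by blast
  then show ?case by auto
next
  case (ev_primS f g n xs y z)
  from ev_primS.IH(1) obtain s1 where s1: "clk (Prim f g) s1 (n # xs) = Suc y" by blast
  from ev_primS.IH(2) obtain s2 where s2: "clk g s2 (n # y # xs) = Suc z" by blast
  let ?s = "max s1 s2"
  have a: "clk (Prim f g) ?s (n # xs) = Suc y" using clk_mono[OF s1] by simp
  have b: "clk g ?s (n # y # xs) = Suc z" using clk_mono[OF s2] by simp
  show ?case by (rule exI[of _ ?s]) (use a b in simp)
next
  case (ev_mini f n xs)
  from ev_mini(2) obtain s0 where s0: "clk f s0 (n # xs) = Suc 0" by blast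
  have "\<forall>m<n. \<exists>s. \<forall>t\<ge>s. clk f t (m # xs) > 1"
  proof (intro allI impI)
    fix m assume "m < n"
    then obtain y s where y: "clk f s (m # xs) = Suc y" "y > 0" using ev_mini(3) by blast
    show "\<exists>s. \<forall>t\<ge>s. clk f t (m # xs) > 1"
      by (rule exI[of _ s]) (use clk_mono[OF y(1)] y(2) in auto)
  qed
  from common_clock[of n "\<lambda>m t. clk f t (m # xs) > 1", OF this]
  obtain s1 where s1: "\<forall>m<n. \<forall>t\<ge>s1. clk f t (m # xs) > 1" by blast
  let ?s = "max (max s0 s1) n"
  have a: "clk f ?s (n # xs) = 1" using clk_mono[OF s0, of ?s] by simp
  have b: "\<forall>k<n. \<not> clk f ?s (k # xs) \<le> 1" using s1 by (simp add: not_le)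
  have bt: "bmin (\<lambda>m. clk f ?s (m # xs) \<le> 1) (Suc ?s) = n"
    by (rule bmin_is) (use a b in auto)
  have c: "n \<le> ?s \<and> clk f ?s (n # xs) = 1" using a by simp
  have "clk (Mini f) ?s xs = (if n \<le> ?s \<and> clk f ?s (n # xs) = 1 then Suc n else 0)"
    by (simp only: clk.simps Let_def bt)
  then have "clk (Mini f) ?s xs = Suc n" using c by simp
  then show ?case by blast
qed

lemma rec_eval_det: "rec_eval p xs y \<Longrightarrow> rec_eval p xs z \<Longrightarrow> y = z"
proof -
  assume a: "rec_eval p xs y" "rec_eval p xs z"
  obtain s1 where s1: "clk p s1 xs = Suc y" using clk_complete[OF a(1)] by blast
  obtain s2 where s2: "clk p s2 xs = Suc z" using clk_complete[OF a(2)] by blast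
  have "clk p (max s1 s2) xs = Suc y" "clk p (max s1 s2) xs = Suc z"
    using clk_mono[OF s1, of "max s1 s2"] clk_mono[OF s2, of "max s1 s2"] by auto
  then show ?thesis by simp
qed

lemma rec_eval_clk: "(\<exists>y. rec_eval p xs y) \<longleftrightarrow> (\<exists>s. clk p s xs \<noteq> 0)"
proof
  assume "\<exists>y. rec_eval p xs y"
  then obtain y where "rec_eval p xs y" by blast
  from clk_complete[OF this] obtain s where "clk p s xs = Suc y" by blast
  then show "\<exists>s. clk p s xs \<noteq> 0" by (intro exI[of _ s]) simp
next
  assume "\<exists>s. clk p s xs \<noteq> 0"
  then obtain s where "clk p s xs \<noteq> 0" by blast
  then obtain y where "clk p s xs = Suc y" using not0_implies_Suc by blast
  from clk_sound[OF this] show "\<exists>y. rec_eval p xs y" by blast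
qed


declare upt_Suc[simp del]

lemma map_proj: "length xs = m \<Longrightarrow> map (\<lambda>g. g xs) (map (\<lambda>j xs. xs ! j) [a..<m]) = drop a xs"
  by (rule nth_equalityI) auto

lemma map_proj'[simp]: "length xs = m \<Longrightarrow> map ((\<lambda>g. g xs) \<circ> (\<lambda>j xs. xs ! j)) [a..<m] = drop a xs"
  by (rule nth_equalityI) auto
lemma map_proj''[simp]: "length xs = m \<Longrightarrow> map (\<lambda>j. xs ! j) [a..<m] = drop a xs"
  by (rule nth_equalityI) auto

lemma rf_projs: "\<forall>g\<in>set (map (\<lambda>j xs. xs ! j) [a..<m]). rf m g"
  by (auto intro: rf_nth)

lemma rp_comp: "rp (length Gs) Q \<Longrightarrow> \<forall>g\<in>set Gs. rf m g \<Longrightarrow> rp m (\<lambda>xs. Q (map (\<lambda>g. g xs) Gs))"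
  unfolding rp_def using rf_comp[of Gs "\<lambda>ys. if Q ys then 1 else 0" m] by simp

lemma rf_prodlist: "\<forall>g\<in>set Hs. rf m g \<Longrightarrow> rf m (\<lambda>v. prod_list (map (\<lambda>h. h v) Hs))"
proof (induction Hs)
  case Nil then show ?case by (simp add: rf_const)
next
  case (Cons h Hs)
  then show ?case by (simp add: rf_mul)
qed

lemma PR_bmin: "PR (\<lambda>_. 0) (\<lambda>w. if w!Suc 0 < w!0 then w!Suc 0 else if Q (w!0 # drop 2 w) then w!0 else Suc (w!0)) n v
  = bmin (\<lambda>j. Q (j # v)) n"
  by (induction n) (auto simp: bmin.simps)

lemma rf_bmin: "rp (Suc m) Q \<Longrightarrow> rf m N \<Longrightarrow> rf m (\<lambda>v. bmin (\<lambda>j. Q (j # v)) (N v))"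
proof -
  assume Q: "rp (Suc m) Q" and N: "rf m N"
  let ?Gs = "(\<lambda>w. w ! 0) # map (\<lambda>j xs. xs ! j) [2..<Suc (Suc m)]"
  have l: "length ?Gs = Suc m" by simp
  have Q': "rp (length ?Gs) Q" unfolding l by (rule Q)
  have "rp (Suc (Suc m)) (\<lambda>w. Q (map (\<lambda>g. g w) ?Gs))"
    by (rule rp_comp[OF Q']) (auto intro: rf_nth)
  then have q: "rp (Suc (Suc m)) (\<lambda>w. Q (w!0 # drop 2 w))"
    unfolding rp_def by (rule rf_cong) (simp add: map_proj)
  have G: "rf (Suc (Suc m)) (\<lambda>w. if w!Suc 0 < w!0 then w!Suc 0 else if Q (w!0 # drop 2 w) then w!0 else Suc (w!0))"
    by (intro rf_if rp_less rf_nth rf_Suc q) auto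
  have "rf m (\<lambda>v. PR (\<lambda>_. 0) (\<lambda>w. if w!Suc 0 < w!0 then w!Suc 0 else if Q (w!0 # drop 2 w) then w!0 else Suc (w!0))
          (N v) (map (\<lambda>a. a v) (map (\<lambda>j xs. xs ! j) [0..<m])))"
    by (rule rf_PRc[OF rf_const G N rf_projs]) simp
  then show ?thesis by (rule rf_cong) (simp add: map_proj PR_bmin)
qed

lemma PR_clk: "PR (\<lambda>zs. clk f (hd zs) (tl zs))
   (\<lambda>w. if w!Suc 0 = 0 then 0 else clk g (w!Suc (Suc 0)) (w!0 # (w!Suc 0 - 1) # drop 3 w)) n (s # ys)
   = rec_nat (clk f s ys) (\<lambda>i r. if r = 0 then 0 else clk g s (i # (r - 1) # ys)) n"
  by (induction n) (auto simp: numeral_3_eq_3)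

theorem rf_clk: "rf (Suc m) (\<lambda>v. clk p (hd v) (tl v))"
proof (induction p arbitrary: m)
  case Zero
  show ?case by (rule rf_cong[OF rf_const[of _ 1]]) simp
next
  case Succ
  show ?case
  proof (cases m)
    case 0
    show ?thesis by (rule rf_cong[OF rf_const[of _ 0]]) (auto simp: 0 length_Suc_conv)
  next
    case (Suc k)
    have "rf (Suc m) (\<lambda>v. Suc (Suc (v ! Suc 0)))" by (intro rf_Suc rf_nth) (simp add: Suc)
    then show ?thesis by (rule rf_cong) (auto simp: Suc length_Suc_conv)
  qed
next
  case (Proj i)
  show ?case
  proof (cases "i < m")
    case True
    have "rf (Suc m) (\<lambda>v. Suc (v ! Suc i))" by (intro rf_Suc rf_nth) (simp add: True)
    then show ?thesis by (rule rf_cong) (use True in \<open>auto simp: length_Suc_conv\<close>)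
  next
    case False
    show ?thesis by (rule rf_cong[OF rf_const[of _ 0]]) (use False in \<open>auto simp: length_Suc_conv\<close>)
  qed
next
  case (Comp f gs)
  let ?Hs = "map (\<lambda>g v. clk g (hd v) (tl v)) gs"
  have H: "\<forall>h\<in>set ?Hs. rf (Suc m) h" using Comp.IH(2) by auto
  have P: "rp (Suc m) (\<lambda>v. prod_list (map (\<lambda>h. h v) ?Hs) = 0)"
    by (intro rp_eq rf_prodlist H rf_const)
  let ?Gs = "hd # map (\<lambda>h v. h v - 1) ?Hs"
  have F: "rf (length ?Gs) (\<lambda>w. clk f (hd w) (tl w))" using Comp.IH(1)[of "length gs"] by simp
  have "rf (Suc m) (\<lambda>v. (\<lambda>w. clk f (hd w) (tl w)) (map (\<lambda>g. g v) ?Gs))"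
    by (rule rf_comp[OF F]) (use Comp.IH(2) in \<open>auto intro!: rf_id0 rf_pred'\<close>)
  then have E: "rf (Suc m) (\<lambda>v. clk f (hd v) (map (\<lambda>g. clk g (hd v) (tl v) - 1) gs))"
    by (simp add: comp_def)
  have "rf (Suc m) (\<lambda>v. if prod_list (map (\<lambda>h. h v) ?Hs) = 0 then 0 else clk f (hd v) (map (\<lambda>g. clk g (hd v) (tl v) - 1) gs))"
    by (rule rf_if[OF P rf_const E])
  then show ?case
  proof (rule rf_cong)
    fix v :: "nat list"
    have e: "(prod_list (map (\<lambda>g. clk g (hd v) (tl v)) gs) = 0) = (\<exists>c\<in>set (map clk gs). c (hd v) (tl v) = 0)"
      by (auto simp: prod_list_zero_iff)
    show "(if prod_list (map (\<lambda>h. h v) ?Hs) = 0 then 0 else clk f (hd v) (map (\<lambda>g. clk g (hd v) (tl v) - 1) gs))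
      = clk (Comp f gs) (hd v) (tl v)"
      using e by (auto simp: comp_def)
  qed
next
  case (Prim f g)
  show ?case
  proof (cases m)
    case 0
    show ?thesis by (rule rf_cong[OF rf_const[of _ 0]]) (auto simp: 0 length_Suc_conv)
  next
    case (Suc k)
    let ?F = "\<lambda>zs. clk f (hd zs) (tl zs)"
    let ?G = "\<lambda>w. if w!Suc 0 = 0 then 0 else clk g (w!Suc (Suc 0)) (w!0 # (w!Suc 0 - 1) # drop 3 w)"
    have F: "rf (Suc k) ?F" by (rule Prim.IH(1))
    let ?Gs = "[\<lambda>w. w!Suc (Suc 0), \<lambda>w. w!0, \<lambda>w. w!Suc 0 - 1] @ map (\<lambda>j w. w!j) [3..<Suc (Suc (Suc k))]"
    have lg: "length ?Gs = Suc (Suc (Suc k))" by simp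
    have g: "rf (length ?Gs) (\<lambda>u. clk g (hd u) (tl u))" unfolding lg by (rule Prim.IH(2))
    have "rf (Suc (Suc (Suc k))) (\<lambda>w. (\<lambda>u. clk g (hd u) (tl u)) (map (\<lambda>h. h w) ?Gs))"
      by (rule rf_comp[OF g]) (auto intro!: rfI)
    then have g2: "rf (Suc (Suc (Suc k))) (\<lambda>w. clk g (w!Suc (Suc 0)) (w!0 # (w!Suc 0 - 1) # drop 3 w))"
      by (rule rf_cong) simp
    have G: "rf (Suc (Suc (Suc k))) ?G"
      by (intro rf_if rp_eq rf_nth rf_const g2) auto
    let ?As = "(\<lambda>v. v!0) # map (\<lambda>j v. v!j) [2..<Suc (Suc k)]"
    have "rf (Suc (Suc k)) (\<lambda>v. PR ?F ?G (v!Suc 0) (map (\<lambda>a. a v) ?As))"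
      by (rule rf_PRc[OF F G]) (auto intro!: rf_nth)
    then have "rf (Suc (Suc k)) (\<lambda>v. PR ?F ?G (v!Suc 0) (v!0 # drop 2 v))"
      by (rule rf_cong) simp
    then show ?thesis unfolding Suc
    proof (rule rf_cong)
      fix v :: "nat list" assume "length v = Suc (Suc k)"
      then obtain s n ys where v: "v = s # n # ys" by (auto simp: length_Suc_conv)
      show "PR ?F ?G (v!Suc 0) (v!0 # drop 2 v) = clk (Prim f g) (hd v) (tl v)"
        unfolding v by (simp add: PR_clk)
    qed
  qed
next
  case (Mini f)
  have f: "rf (Suc (Suc m)) (\<lambda>u. clk f (hd u) (tl u))" by (rule Mini.IH)
  let ?Gs = "[\<lambda>w. w!Suc 0, \<lambda>w. w!0] @ map (\<lambda>j w. w!j) [2..<Suc (Suc m)]"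
  have lg: "length ?Gs = Suc (Suc m)" by simp
  have "rf (Suc (Suc m)) (\<lambda>w. (\<lambda>u. clk f (hd u) (tl u)) (map (\<lambda>h. h w) ?Gs))"
    by (rule rf_comp) (unfold lg, rule f, auto intro!: rf_nth)
  then have f2: "rf (Suc (Suc m)) (\<lambda>w. clk f (w!Suc 0) (w!0 # drop 2 w))"
    by (rule rf_cong) simp
  have q: "rp (Suc (Suc m)) (\<lambda>w. clk f (w!Suc 0) (w!0 # drop 2 w) \<le> 1)"
    by (intro rp_le f2 rf_const)
  have M: "rf (Suc m) (\<lambda>v. bmin (\<lambda>j. clk f ((j # v)!Suc 0) ((j # v)!0 # drop 2 (j # v)) \<le> 1) (Suc (v!0)))"
    by (rule rf_bmin[OF q]) (auto intro!: rf_Suc rf_nth)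
  let ?M = "\<lambda>v. bmin (\<lambda>j. clk f ((j # v)!Suc 0) ((j # v)!0 # drop 2 (j # v)) \<le> 1) (Suc (v!0))"
  let ?Cs = "[\<lambda>v. v!0, ?M] @ map (\<lambda>j w. w!j) [1..<Suc m]"
  have lc: "length ?Cs = Suc (Suc m)" by simp
  have "rf (Suc m) (\<lambda>w. (\<lambda>u. clk f (hd u) (tl u)) (map (\<lambda>h. h w) ?Cs))"
    by (rule rf_comp) (unfold lc, rule f, use M in \<open>auto intro!: rf_nth\<close>)
  then have C: "rf (Suc m) (\<lambda>v. clk f (v!0) (?M v # drop 1 v))"
    by (rule rf_cong) simp
  have "rf (Suc m) (\<lambda>v. if ?M v \<le> v!0 \<and> clk f (v!0) (?M v # drop 1 v) = 1 then Suc (?M v) else 0)"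
    by (intro rf_if rp_and rp_le rp_eq M C rf_nth rf_const rf_Suc) auto
  then show ?case
  proof (rule rf_cong)
    fix v :: "nat list" assume "length v = Suc m"
    then obtain s xs where v: "v = s # xs" by (auto simp: length_Suc_conv)
    show "(if ?M v \<le> v!0 \<and> clk f (v!0) (?M v # drop 1 v) = 1 then Suc (?M v) else 0) = clk (Mini f) (hd v) (tl v)"
      unfolding v by (simp add: Let_def)
  qed
qed


inductive_cases mini_inv: "rec_eval (Mini f) xs y"

lemma re_from_rf: "rf (Suc (Suc 0)) R \<Longrightarrow> (\<And>k. k \<in> A \<longleftrightarrow> (\<exists>j. R [k, j] = 0)) \<Longrightarrow> re_set A"
proof -
  assume R: "rf (Suc (Suc 0)) R" and A: "\<And>k. k \<in> A \<longleftrightarrow> (\<exists>j. R [k, j] = 0)"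
  have "rf (Suc (Suc 0)) (\<lambda>v. R (map (\<lambda>g. g v) [\<lambda>v. v!Suc 0, \<lambda>v. v!0]))"
    by (rule rf_comp) (use R in \<open>auto intro: rf_nth\<close>)
  then obtain q where q: "\<forall>xs. length xs = Suc (Suc 0) \<longrightarrow> rec_eval q xs (R [xs!Suc 0, xs!0])"
    unfolding rf_def by auto
  have q2: "rec_eval q [j, k] (R [k, j])" for j k using q[rule_format, of "[j,k]"] by simp
  show ?thesis unfolding re_set_def
  proof (rule exI[of _ "Mini q"], intro allI iffI)
    fix k assume "k \<in> A"
    then have ex: "\<exists>j. R [k, j] = 0" using A by blast
    let ?n = "LEAST j. R [k, j] = 0"
    have n0: "R [k, ?n] = 0" using ex by (rule LeastI_ex)
    have "rec_eval (Mini q) [k] ?n"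
    proof (rule ev_mini)
      show "rec_eval q [?n, k] 0" using q2[of ?n k] n0 by simp
      show "\<forall>m<?n. \<exists>y. rec_eval q [m, k] y \<and> 0 < y"
      proof (intro allI impI)
        fix m assume "m < ?n"
        then have "R [k, m] \<noteq> 0" by (rule not_less_Least)
        then show "\<exists>y. rec_eval q [m, k] y \<and> 0 < y" using q2[of m k] by blast
      qed
    qed
    then show "\<exists>y. rec_eval (Mini q) [k] y" by blast
  next
    fix k assume "\<exists>y. rec_eval (Mini q) [k] y"
    then obtain y where "rec_eval (Mini q) [k] y" by blast
    then have "rec_eval q [y, k] 0" by (rule mini_inv) simp
    then have "R [k, y] = 0" using rec_eval_det[OF q2[of y k]] by simp
    then show "k \<in> A" using A by blast
  qed
qed

lemma rf_of_re: "re_set A \<Longrightarrow> \<exists>R. rf (Suc (Suc 0)) R \<and> (\<forall>k. k \<in> A \<longleftrightarrow> (\<exists>s. R [k, s] \<noteq> 0))"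
proof -
  assume "re_set A"
  then obtain p where p: "\<forall>k. k \<in> A \<longleftrightarrow> (\<exists>y. rec_eval p [k] y)" unfolding re_set_def by blast
  have c: "rf (Suc (Suc 0)) (\<lambda>v. clk p (hd v) (tl v))" by (rule rf_clk)
  have "rf (Suc (Suc 0)) (\<lambda>v. (\<lambda>v. clk p (hd v) (tl v)) (map (\<lambda>g. g v) [\<lambda>v. v!Suc 0, \<lambda>v. v!0]))"
    by (rule rf_comp) (use c in \<open>auto intro: rf_nth\<close>)
  then have "rf (Suc (Suc 0)) (\<lambda>v. clk p (v!Suc 0) [v!0])" by simp
  moreover have "\<forall>k. k \<in> A \<longleftrightarrow> (\<exists>s. (\<lambda>v. clk p (v!Suc 0) [v!0]) [k, s] \<noteq> 0)"
    using p rec_eval_clk by simp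
  ultimately show ?thesis by blast
qed

lemma recursive_iff: "recursive_set A \<longleftrightarrow> rf (Suc 0) (\<lambda>v. if v!0 \<in> A then 1 else 0)"
proof
  assume "recursive_set A"
  then obtain p where p: "\<forall>k. rec_eval p [k] (if k \<in> A then 1 else 0)" unfolding recursive_set_def by blast
  show "rf (Suc 0) (\<lambda>v. if v!0 \<in> A then 1 else 0)" unfolding rf_def
  proof (rule exI[of _ p], intro allI impI)
    fix xs :: "nat list" assume "length xs = Suc 0"
    then obtain k where "xs = [k]" by (auto simp: length_Suc_conv)
    then show "rec_eval p xs (if xs ! 0 \<in> A then 1 else 0)" using p by simp
  qed
next
  assume "rf (Suc 0) (\<lambda>v. if v!0 \<in> A then 1 else 0)"
  then obtain p where p: "\<forall>xs. length xs = Suc 0 \<longrightarrow> rec_eval p xs (if xs!0 \<in> A then 1 else 0)" unfolding rf_def by blast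
  show "recursive_set A" unfolding recursive_set_def
  proof (rule exI[of _ p], rule allI)
    fix k show "rec_eval p [k] (if k \<in> A then 1 else 0)" using p[rule_format, of "[k]"] by simp
  qed
qed

definition hdc :: "nat \<Rightarrow> nat" where "hdc l = fst (prod_decode (l - 1))"
definition tlc :: "nat \<Rightarrow> nat" where "tlc l = snd (prod_decode (l - 1))"
definition consc :: "nat \<Rightarrow> nat \<Rightarrow> nat" where "consc a l = Suc (prod_encode (a, l))"

lemma pd0[simp]: "prod_decode 0 = (0, 0)"
  by (simp add: prod_decode_def prod_decode_aux.simps)

lemma hdc_cons[simp]: "hdc (list_encode (x # xs)) = x" by (simp add: hdc_def)
lemma hdc_Suc[simp]: "hdc (Suc (prod_encode (x, y))) = x" by (simp add: hdc_def)
lemma tlc_le[simp]: "tlc (list_encode xs) = list_encode (tl xs)"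
  by (cases xs) (simp_all add: tlc_def)
lemma consc_le[simp]: "consc x (list_encode xs) = list_encode (x # xs)" by (simp add: consc_def)

lemma rf_hdc[rfI]: "rf m f \<Longrightarrow> rf m (\<lambda>v. hdc (f v))" unfolding hdc_def by (intro rfI)
lemma rf_tlc[rfI]: "rf m f \<Longrightarrow> rf m (\<lambda>v. tlc (f v))" unfolding tlc_def by (intro rfI)
lemma rf_consc[rfI]: "rf m f \<Longrightarrow> rf m g \<Longrightarrow> rf m (\<lambda>v. consc (f v) (g v))" unfolding consc_def by (intro rfI)

lemma len_lc: "length (list_decode l) \<le> l"
proof (induction l rule: list_decode.induct)
  case 1 then show ?case by simp
next
  case (2 n)
  obtain x y where xy: "prod_decode n = (x, y)" by (cases "prod_decode n")
  then have "y \<le> n" by (metis le_prod_encode_2 prod_decode_inverse)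
  then show ?case using 2 xy by simp
qed

lemma rf_shift: "rf (length As + m) G \<Longrightarrow> \<forall>a\<in>set As. rf (k + m) a \<Longrightarrow>
  rf (k + m) (\<lambda>w. G (map (\<lambda>a. a w) As @ drop k w))"
proof -
  assume G: "rf (length As + m) G" and A: "\<forall>a\<in>set As. rf (k + m) a"
  let ?Gs = "As @ map (\<lambda>j w. w ! j) [k..<k+m]"
  have l: "length ?Gs = length As + m" by simp
  have "rf (k + m) (\<lambda>w. G (map (\<lambda>g. g w) ?Gs))"
    by (rule rf_comp) (unfold l, rule G, use A in \<open>auto intro: rf_nth\<close>)
  then show ?thesis by (rule rf_cong) simp
qed

lemma rf_drop: "rf m L \<Longrightarrow> rf (k + m) (\<lambda>w. L (drop k w))"
  using rf_shift[of "[]" m L k] by simp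

lemma PR_tlpow: "PR (\<lambda>ys. ys!0) (\<lambda>w. tlc (w!Suc 0)) n [l] = (tlc ^^ n) l"
  by (induction n) auto

lemma rf_tlpow[rfI]: "rf m I \<Longrightarrow> rf m L \<Longrightarrow> rf m (\<lambda>v. (tlc ^^ I v) (L v))"
proof -
  assume I: "rf m I" and L: "rf m L"
  have "rf m (\<lambda>v. PR (\<lambda>ys. ys!0) (\<lambda>w. tlc (w!Suc 0)) (I v) (map (\<lambda>a. a v) [L]))"
    by (rule rf_PRc) (use I L in \<open>auto intro!: rfI\<close>)
  then show ?thesis by (simp add: PR_tlpow)
qed

lemma tlpow_le: "(tlc ^^ i) (list_encode xs) = list_encode (drop i xs)"
  by (induction i) (auto simp: drop_Suc tl_drop)

definition nthc :: "nat \<Rightarrow> nat \<Rightarrow> nat" where "nthc l i = hdc ((tlc ^^ i) l)"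

lemma nthc_le: "nthc (list_encode xs) i = (if i < length xs then xs ! i else 0)"
  unfolding nthc_def tlpow_le
  by (cases "i < length xs") (auto simp: Cons_nth_drop_Suc[symmetric] hdc_def)

lemma rf_nthc[rfI]: "rf m L \<Longrightarrow> rf m I \<Longrightarrow> rf m (\<lambda>v. nthc (L v) (I v))"
  unfolding nthc_def by (intro rfI)

primrec facc :: "(nat list \<Rightarrow> nat) \<Rightarrow> nat \<Rightarrow> nat \<Rightarrow> nat list \<Rightarrow> nat \<Rightarrow> nat" where
  "facc G a l v 0 = a"
| "facc G a l v (Suc i) = (if (tlc ^^ i) l = 0 then facc G a l v i
     else G (hdc ((tlc ^^ i) l) # facc G a l v i # v))"

lemma facc_take: "facc G a (list_encode xs) v i = foldl (\<lambda>acc x. G (x # acc # v)) a (take i xs)"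
proof (induction i)
  case 0 then show ?case by simp
next
  case (Suc i)
  show ?case
  proof (cases "i < length xs")
    case True
    then have "drop i xs \<noteq> []" by simp
    then have "list_encode (drop i xs) \<noteq> 0" by (cases "drop i xs") auto
    moreover have "hdc (list_encode (drop i xs)) = xs ! i" using True by (simp add: Cons_nth_drop_Suc[symmetric])
    ultimately show ?thesis using Suc True by (simp add: tlpow_le take_Suc_conv_app_nth)
  next
    case False
    then show ?thesis using Suc by (simp add: tlpow_le)
  qed
qed

lemma PR_facc: "PR A' (\<lambda>w. if (tlc ^^ (w!0)) (L (drop 2 w)) = 0 then w!Suc 0
     else G (hdc ((tlc ^^ (w!0)) (L (drop 2 w))) # w!Suc 0 # drop 2 w)) n v = facc G (A' v) (L v) v n"
  by (induction n) simp_all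

lemma rf_foldl: "rf (Suc (Suc m)) G \<Longrightarrow> rf m L \<Longrightarrow> rf m A \<Longrightarrow>
  rf m (\<lambda>v. foldl (\<lambda>acc a. G (a # acc # v)) (A v) (list_decode (L v)))"
proof -
  assume G: "rf (Suc (Suc m)) G" and L: "rf m L" and A: "rf m A"
  have L2: "rf (Suc (Suc m)) (\<lambda>w. L (drop 2 w))" using rf_drop[OF L, of 2] by simp
  have h1: "rf (Suc (Suc m)) (\<lambda>w. hdc ((tlc ^^ (w!0)) (L (drop 2 w))))"
    by (intro rf_hdc rf_tlpow L2 rf_nth) simp
  have h2: "rf (Suc (Suc m)) (\<lambda>w. (tlc ^^ (w!0)) (L (drop 2 w)))"
    by (intro rf_tlpow L2 rf_nth) simp
  have a: "\<forall>a\<in>set [\<lambda>w. hdc ((tlc ^^ (w!0)) (L (drop 2 w))), \<lambda>w. w!Suc 0]. rf (2 + m) a"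
    using h1 by (auto intro: rf_nth)
  have G': "rf (length [\<lambda>w. hdc ((tlc ^^ (w!0)) (L (drop 2 w))), \<lambda>w. w!Suc 0] + m) G" using G by simp
  have "rf (2 + m) (\<lambda>w. G (map (\<lambda>a. a w) [\<lambda>w. hdc ((tlc ^^ (w!0)) (L (drop 2 w))), \<lambda>w. w!Suc 0] @ drop 2 w))"
    by (rule rf_shift[OF G' a])
  then have G2: "rf (Suc (Suc m)) (\<lambda>w. G (hdc ((tlc ^^ (w!0)) (L (drop 2 w))) # w!Suc 0 # drop 2 w))"
    by simp
  have S: "rf (Suc (Suc m)) (\<lambda>w. if (tlc ^^ (w!0)) (L (drop 2 w)) = 0 then w!Suc 0
     else G (hdc ((tlc ^^ (w!0)) (L (drop 2 w))) # w!Suc 0 # drop 2 w))"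
    by (intro rf_if rp_eq h2 rf_const rf_nth G2) simp
  have "rf m (\<lambda>v. PR A (\<lambda>w. if (tlc ^^ (w!0)) (L (drop 2 w)) = 0 then w!Suc 0
     else G (hdc ((tlc ^^ (w!0)) (L (drop 2 w))) # w!Suc 0 # drop 2 w)) (L v) (map (\<lambda>a. a v) (map (\<lambda>j v. v!j) [0..<m])))"
    by (rule rf_PRc[OF A S L rf_projs]) simp
  then have "rf m (\<lambda>v. facc G (A v) (L v) v (L v))"
    by (rule rf_cong) (simp add: PR_facc)
  then show ?thesis
  proof (rule rf_cong)
    fix v :: "nat list"
    have "facc G (A v) (L v) v (L v) = facc G (A v) (list_encode (list_decode (L v))) v (L v)" by (simp only: list_decode_inverse)
    also have "\<dots> = foldl (\<lambda>acc x. G (x # acc # v)) (A v) (take (L v) (list_decode (L v)))"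
      by (rule facc_take)
    also have "\<dots> = foldl (\<lambda>acc x. G (x # acc # v)) (A v) (list_decode (L v))"
      using len_lc[of "L v"] by simp
    finally show "facc G (A v) (L v) v (L v) = foldl (\<lambda>acc a. G (a # acc # v)) (A v) (list_decode (L v))" .
  qed
qed


lemma rf_foldl': "rf (Suc (Suc m)) G \<Longrightarrow> rf m L \<Longrightarrow> rf m A \<Longrightarrow>
  (\<And>v. length v = m \<Longrightarrow> foldl (\<lambda>acc a. G (a # acc # v)) (A v) (list_decode (L v)) = H v) \<Longrightarrow> rf m H"
  using rf_foldl rf_cong by blast

lemma rf_G2: "rf (Suc m) F \<Longrightarrow> rf (Suc (Suc m)) (\<lambda>w. F (w!0 # drop 2 w))"
proof -
  assume F: "rf (Suc m) F"
  have F': "rf (length [\<lambda>w. w!0] + m) F" using F by simp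
  have "rf (2 + m) (\<lambda>w. F (map (\<lambda>a. a w) [\<lambda>w. w!0] @ drop 2 w))"
    by (rule rf_shift[OF F']) (auto intro: rf_nth)
  then show ?thesis by simp
qed

lemma foldl_Suc: "foldl (\<lambda>acc a. Suc acc) n xs = n + length xs"
  by (induction xs arbitrary: n) auto

lemma rf_len[rfI]: "rf m L \<Longrightarrow> rf m (\<lambda>v. length (list_decode (L v)))"
  by (rule rf_foldl'[where G="\<lambda>w. Suc (w!Suc 0)" and A="\<lambda>_. 0"]) (auto intro!: rfI simp: foldl_Suc)

lemma foldl_cons: "foldl (\<lambda>acc a. consc (f a) acc) (list_encode ys) xs = list_encode (rev (map f xs) @ ys)"
proof (induction xs arbitrary: ys)
  case Nil then show ?case by simp
next
  case (Cons a xs)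
  have "consc (f a) (list_encode ys) = list_encode (f a # ys)" by (rule consc_le)
  then show ?case by (simp only: foldl_Cons Cons.IH) simp
qed

lemma foldl_cons0: "foldl (\<lambda>acc a. consc a acc) 0 xs = list_encode (rev xs)"
  using foldl_cons[of id "[]" xs] by simp

lemma foldl_cons1: "foldl (\<lambda>acc a. consc a acc) (list_encode ys) xs = list_encode (rev xs @ ys)"
  using foldl_cons[of id ys xs] by simp

lemma rf_rev[rfI]: "rf m L \<Longrightarrow> rf m (\<lambda>v. list_encode (rev (list_decode (L v))))"
  by (rule rf_foldl'[where G="\<lambda>w. consc (w!0) (w!Suc 0)" and A="\<lambda>_. 0"])
     (auto intro!: rfI simp: foldl_cons0)

lemma rf_mapc: "rf (Suc m) F \<Longrightarrow> rf m L \<Longrightarrow> rf m (\<lambda>v. list_encode (map (\<lambda>a. F (a # v)) (list_decode (L v))))"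
proof -
  assume F: "rf (Suc m) F" and L: "rf m L"
  have G: "rf (Suc (Suc m)) (\<lambda>w. consc (F (w!0 # drop 2 w)) (w!Suc 0))"
    by (intro rf_consc rf_G2[OF F] rf_nth) simp
  have "rf m (\<lambda>v. foldl (\<lambda>acc a. consc (F (a # v)) acc) (list_encode []) (list_decode (L v)))"
    using rf_foldl[OF G L rf_const[of m 0]] by simp
  then have "rf m (\<lambda>v. list_encode (rev (map (\<lambda>a. F (a # v)) (list_decode (L v)))))"
    by (simp only: foldl_cons) simp
  from rf_rev[OF this] show ?thesis by (simp add: rev_map)
qed

lemma rf_app[rfI]: "rf m A \<Longrightarrow> rf m B \<Longrightarrow> rf m (\<lambda>v. list_encode (list_decode (A v) @ list_decode (B v)))"
proof -
  assume A: "rf m A" and B: "rf m B"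
  have G: "rf (Suc (Suc m)) (\<lambda>w. consc (w!0) (w!Suc 0))" by (intro rfI) auto
  have "rf m (\<lambda>v. foldl (\<lambda>acc a. consc a acc) (list_encode (list_decode (B v)))
     (list_decode (list_encode (rev (list_decode (A v))))))"
    using rf_foldl[OF G rf_rev[OF A] B] by simp
  then show ?thesis by (simp only: foldl_cons1 list_encode_inverse) simp
qed

lemma foldl_concat: "foldl (\<lambda>acc a. list_encode (list_decode acc @ list_decode a)) (list_encode ys) xs
  = list_encode (ys @ concat (map list_decode xs))"
  by (induction xs arbitrary: ys) auto

lemma rf_concatc: "rf m L \<Longrightarrow> rf m (\<lambda>v. list_encode (concat (map list_decode (list_decode (L v)))))"
proof -
  assume L: "rf m L"
  have G: "rf (Suc (Suc m)) (\<lambda>w. list_encode (list_decode (w!Suc 0) @ list_decode (w!0)))"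
    by (intro rf_app rf_nth) auto
  have "rf m (\<lambda>v. foldl (\<lambda>acc a. list_encode (list_decode acc @ list_decode a)) (list_encode []) (list_decode (L v)))"
    using rf_foldl[OF G L rf_const[of m 0]] by simp
  then show ?thesis by (simp only: foldl_concat) simp
qed

lemma PR_tab: "PR (\<lambda>_. 0) (\<lambda>w. consc (F (w!0 # drop 2 w)) (w!Suc 0)) n v = list_encode (rev (map (\<lambda>i. F (i # v)) [0..<n]))"
  by (induction n) (simp_all add: upt_Suc)

lemma rf_tab: "rf (Suc m) F \<Longrightarrow> rf m N \<Longrightarrow> rf m (\<lambda>v. list_encode (map (\<lambda>i. F (i # v)) [0..<N v]))"
proof -
  assume F: "rf (Suc m) F" and N: "rf m N"
  have G: "rf (Suc (Suc m)) (\<lambda>w. consc (F (w!0 # drop 2 w)) (w!Suc 0))"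
    by (intro rf_consc rf_G2[OF F] rf_nth) simp
  have "rf m (\<lambda>v. PR (\<lambda>_. 0) (\<lambda>w. consc (F (w!0 # drop 2 w)) (w!Suc 0)) (N v) (map (\<lambda>a. a v) (map (\<lambda>j v. v!j) [0..<m])))"
    by (rule rf_PRc[OF rf_const G N rf_projs]) simp
  then have "rf m (\<lambda>v. list_encode (rev (map (\<lambda>i. F (i # v)) [0..<N v])))"
    by (rule rf_cong) (simp add: PR_tab)
  from rf_rev[OF this] show ?thesis by simp
qed

lemma foldl_sum: "foldl (\<lambda>acc a. acc + f a) n xs = n + sum_list (map f xs)"
  by (induction xs arbitrary: n) (auto simp: add.assoc)

lemma rf_sumc: "rf (Suc m) F \<Longrightarrow> rf m L \<Longrightarrow> rf m (\<lambda>v. sum_list (map (\<lambda>a. F (a # v)) (list_decode (L v))))"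
proof -
  assume F: "rf (Suc m) F" and L: "rf m L"
  have G: "rf (Suc (Suc m)) (\<lambda>w. w!Suc 0 + F (w!0 # drop 2 w))"
    by (intro rf_add rf_G2[OF F] rf_nth) simp
  have "rf m (\<lambda>v. foldl (\<lambda>acc a. acc + F (a # v)) 0 (list_decode (L v)))"
    using rf_foldl[OF G L rf_const[of m 0]] by simp
  then show ?thesis by (simp only: foldl_sum) simp
qed

lemma foldl_prod: "foldl (\<lambda>acc a. acc * f a) n xs = n * prod_list (map f xs)"
  by (induction xs arbitrary: n) (auto simp: mult.assoc)

lemma prod_list_if: "prod_list (map (\<lambda>a. if P a then 1 else 0) xs) = (if \<forall>a\<in>set xs. P a then 1 else (0::nat))"
  by (induction xs) auto

lemma rp_allc: "rp (Suc m) P \<Longrightarrow> rf m L \<Longrightarrow> rp m (\<lambda>v. \<forall>a\<in>set (list_decode (L v)). P (a # v))"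
proof -
  assume P: "rp (Suc m) P" and L: "rf m L"
  have G: "rf (Suc (Suc m)) (\<lambda>w. w!Suc 0 * (if P (w!0 # drop 2 w) then 1 else 0))"
    using rf_G2[OF P[unfolded rp_def]] by (intro rf_mul rf_nth) auto
  have "rf m (\<lambda>v. foldl (\<lambda>acc a. acc * (if P (a # v) then 1 else 0)) 1 (list_decode (L v)))"
    using rf_foldl[OF G L rf_const[of m 1]] by simp
  then have "rf m (\<lambda>v. prod_list (map (\<lambda>a. if P (a # v) then 1 else 0) (list_decode (L v))))"
    by (simp only: foldl_prod) simp
  then show ?thesis unfolding rp_def
  proof (rule rf_cong)
    fix v :: "nat list"
    show "prod_list (map (\<lambda>a. if P (a # v) then 1 else (0::nat)) (list_decode (L v))) =
      (if \<forall>a\<in>set (list_decode (L v)). P (a # v) then 1 else 0)"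
      using prod_list_if[where P="\<lambda>a. P (a # v)" and xs="list_decode (L v)"] by simp
  qed
qed

lemma PR_bsum: "PR (\<lambda>_. 0) (\<lambda>w. w!Suc 0 + F (w!0 # drop 2 w)) n v = (\<Sum>i<n. F (i # v))"
  by (induction n) simp_all

lemma rf_bsum: "rf (Suc m) F \<Longrightarrow> rf m N \<Longrightarrow> rf m (\<lambda>v. \<Sum>i<N v. F (i # v))"
proof -
  assume F: "rf (Suc m) F" and N: "rf m N"
  have G: "rf (Suc (Suc m)) (\<lambda>w. w!Suc 0 + F (w!0 # drop 2 w))"
    by (intro rf_add rf_G2[OF F] rf_nth) simp
  have "rf m (\<lambda>v. PR (\<lambda>_. 0) (\<lambda>w. w!Suc 0 + F (w!0 # drop 2 w)) (N v) (map (\<lambda>a. a v) (map (\<lambda>j v. v!j) [0..<m])))"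
    by (rule rf_PRc[OF rf_const G N rf_projs]) simp
  then show ?thesis by (rule rf_cong) (simp add: PR_bsum)
qed

lemma PR_bprod: "PR (\<lambda>_. Suc 0) (\<lambda>w. w!Suc 0 * F (w!0 # drop 2 w)) n v = (\<Prod>i<n. F (i # v))"
  by (induction n) (simp_all add: mult.commute)

lemma rf_bprod: "rf (Suc m) F \<Longrightarrow> rf m N \<Longrightarrow> rf m (\<lambda>v. \<Prod>i<N v. F (i # v))"
proof -
  assume F: "rf (Suc m) F" and N: "rf m N"
  have G: "rf (Suc (Suc m)) (\<lambda>w. w!Suc 0 * F (w!0 # drop 2 w))"
    by (intro rf_mul rf_G2[OF F] rf_nth) simp
  have "rf m (\<lambda>v. PR (\<lambda>_. Suc 0) (\<lambda>w. w!Suc 0 * F (w!0 # drop 2 w)) (N v) (map (\<lambda>a. a v) (map (\<lambda>j v. v!j) [0..<m])))"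
    by (rule rf_PRc[OF rf_const G N rf_projs]) simp
  then show ?thesis by (rule rf_cong) (simp add: PR_bprod)
qed

definition imag :: "nat \<Rightarrow> nat" where "imag z = (if even z then z div 2 else Suc (z div 2))"
definition ienc :: "bool \<Rightarrow> nat \<Rightarrow> nat" where "ienc neg m = (if neg \<and> m > 0 then 2 * m - 1 else 2 * m)"

lemma int_decode_imag: "int_decode z = (if odd z then - int (imag z) else int (imag z))"
  by (simp add: int_decode_def sum_decode_def imag_def)

lemma ienc_eq: "ienc neg m = int_encode (if neg then - int m else int m)"
  by (cases m) (auto simp: ienc_def int_encode_def sum_encode_def)

lemma rf_imag[rfI]: "rf m f \<Longrightarrow> rf m (\<lambda>v. imag (f v))" unfolding imag_def by (intro rfI)
lemma rf_ienc[rfI]: "rp m P \<Longrightarrow> rf m f \<Longrightarrow> rf m (\<lambda>v. ienc (P v) (f v))" unfolding ienc_def by (intro rfI)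

lemma imul_code: "int_encode (int_decode a * int_decode b) = ienc (odd a \<noteq> odd b) (imag a * imag b)"
  unfolding ienc_eq int_decode_imag by auto

lemma ineg_code: "int_encode (- int_decode a) = ienc (even a) (imag a)"
  unfolding ienc_eq int_decode_imag by auto

lemma rp_iff[rfI]: "rp m P \<Longrightarrow> rp m Q \<Longrightarrow> rp m (\<lambda>xs. P xs = Q xs)"
proof -
  assume "rp m P" "rp m Q"
  then have "rp m (\<lambda>xs. (P xs \<longrightarrow> Q xs) \<and> (Q xs \<longrightarrow> P xs))" by (intro rfI)
  then show ?thesis by (rule back_subst[of "rp m"]) auto
qed

lemma rf_imul[rfI]: "rf m f \<Longrightarrow> rf m g \<Longrightarrow> rf m (\<lambda>v. int_encode (int_decode (f v) * int_decode (g v)))"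
  unfolding imul_code by (intro rfI) auto

lemma rf_ineg[rfI]: "rf m f \<Longrightarrow> rf m (\<lambda>v. int_encode (- int_decode (f v)))"
  unfolding ineg_code by (intro rfI)

lemma rf_iofnat[rfI]: "rf m f \<Longrightarrow> rf m (\<lambda>v. int_encode (int (f v)))"
proof -
  assume "rf m f"
  then have "rf m (\<lambda>v. 2 * f v)" by (intro rfI)
  then show ?thesis by (simp add: int_encode_def sum_encode_def)
qed


definition wf :: "nat \<Rightarrow> ipoly \<Rightarrow> bool" where "wf N P \<longleftrightarrow> (\<forall>m\<in>set P. length (snd m) = N)"

definition mono_eval :: "int \<times> nat list \<Rightarrow> rat list \<Rightarrow> rat" where
  "mono_eval m xs = of_int (fst m) * (\<Prod>i<length xs. (xs ! i) ^ (snd m ! i))"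

lemma eval_alt: "ipoly_eval P xs = sum_list (map (\<lambda>m. mono_eval m xs) P)"
  unfolding ipoly_eval_def mono_eval_def by (induction P) auto

lemma eval_append[simp]: "ipoly_eval (P @ Q) xs = ipoly_eval P xs + ipoly_eval Q xs"
  by (simp add: eval_alt)
lemma eval_Nil[simp]: "ipoly_eval [] xs = 0" by (simp add: eval_alt)
lemma eval_concat: "ipoly_eval (concat Ps) xs = sum_list (map (\<lambda>P. ipoly_eval P xs) Ps)"
  by (induction Ps) auto

lemma wf_append[simp]: "wf N (P @ Q) \<longleftrightarrow> wf N P \<and> wf N Q" by (auto simp: wf_def)
lemma wf_concat: "(\<forall>P\<in>set Ps. wf N P) \<Longrightarrow> wf N (concat Ps)" by (auto simp: wf_def)

definition nth0 :: "nat list \<Rightarrow> nat \<Rightarrow> nat" where "nth0 es i = (if i < length es then es ! i else 0)"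

definition mmul :: "nat \<Rightarrow> int \<times> nat list \<Rightarrow> int \<times> nat list \<Rightarrow> int \<times> nat list" where
  "mmul N m1 m2 = (fst m1 * fst m2, map (\<lambda>i. nth0 (snd m1) i + nth0 (snd m2) i) [0..<N])"

definition pmul :: "nat \<Rightarrow> ipoly \<Rightarrow> ipoly \<Rightarrow> ipoly" where
  "pmul N P Q = concat (map (\<lambda>m1. map (\<lambda>m2. mmul N m1 m2) Q) P)"

lemma mono_eval_mmul: "length xs = N \<Longrightarrow> length (snd m1) = N \<Longrightarrow> length (snd m2) = N \<Longrightarrow>
  mono_eval (mmul N m1 m2) xs = mono_eval m1 xs * mono_eval m2 xs"
proof -
  assume l: "length xs = N" "length (snd m1) = N" "length (snd m2) = N"
  have "(\<Prod>i<N. xs ! i ^ (map (\<lambda>i. nth0 (snd m1) i + nth0 (snd m2) i) [0..<N] ! i))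
      = (\<Prod>i<N. xs ! i ^ (snd m1 ! i) * xs ! i ^ (snd m2 ! i))"
    by (rule prod.cong) (use l in \<open>auto simp: nth0_def power_add\<close>)
  also have "\<dots> = (\<Prod>i<N. xs ! i ^ (snd m1 ! i)) * (\<Prod>i<N. xs ! i ^ (snd m2 ! i))"
    by (rule prod.distrib)
  finally show ?thesis unfolding mono_eval_def mmul_def using l by (simp add: ac_simps)
qed

lemma eval_map_mmul: "length xs = N \<Longrightarrow> length (snd m1) = N \<Longrightarrow> wf N Q \<Longrightarrow>
  ipoly_eval (map (mmul N m1) Q) xs = mono_eval m1 xs * ipoly_eval Q xs"
  by (induction Q) (auto simp: eval_alt wf_def mono_eval_mmul distrib_left)

lemma eval_pmul: "wf N P \<Longrightarrow> wf N Q \<Longrightarrow> length xs = N \<Longrightarrow>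
  ipoly_eval (pmul N P Q) xs = ipoly_eval P xs * ipoly_eval Q xs"
proof (induction P)
  case Nil then show ?case by (simp add: pmul_def)
next
  case (Cons m1 P)
  have "pmul N (m1 # P) Q = map (mmul N m1) Q @ pmul N P Q" by (simp add: pmul_def)
  moreover have "ipoly_eval (m1 # P) xs = mono_eval m1 xs + ipoly_eval P xs" by (simp add: eval_alt)
  ultimately show ?case using Cons by (simp add: eval_map_mmul wf_def distrib_right)
qed

lemma wf_pmul[simp]: "wf N (pmul N P Q)" by (auto simp: wf_def pmul_def mmul_def)

definition pconst :: "nat \<Rightarrow> int \<Rightarrow> ipoly" where "pconst N c = [(c, replicate N 0)]"
lemma wf_pconst[simp]: "wf N (pconst N c)" by (simp add: wf_def pconst_def)
lemma mono_zero: "length xs = N \<Longrightarrow> mono_eval (c, replicate N 0) xs = of_int c"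
  by (simp add: mono_eval_def)
lemma mono_unit: "length xs = N \<Longrightarrow> j < N \<Longrightarrow> mono_eval (c, map (\<lambda>i. if i = j then 1 else 0) [0..<N]) xs = of_int c * xs ! j"
proof -
  assume a: "length xs = N" "j < N"
  have "(\<Prod>i<N. xs ! i ^ (map (\<lambda>i. if i = j then 1 else 0) [0..<N] ! i)) = (\<Prod>i<N. if i = j then xs ! i else 1)"
    by (rule prod.cong) auto
  also have "\<dots> = xs ! j" using a by (simp add: prod.delta)
  finally show ?thesis unfolding mono_eval_def using a by simp
qed
lemma eval_pconst[simp]: "length xs = N \<Longrightarrow> ipoly_eval (pconst N c) xs = of_int c"
  by (simp add: eval_alt pconst_def mono_zero)

definition pvar :: "nat \<Rightarrow> nat \<Rightarrow> ipoly" where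
  "pvar N j = [(1, map (\<lambda>i. if i = j then 1 else 0) [0..<N])]"
lemma wf_pvar[simp]: "wf N (pvar N j)" by (simp add: wf_def pvar_def)
lemma eval_pvar: "length xs = N \<Longrightarrow> j < N \<Longrightarrow> ipoly_eval (pvar N j) xs = xs ! j"
  by (simp add: eval_alt pvar_def mono_unit)

definition shift :: "ipoly \<Rightarrow> ipoly" where "shift P = map (\<lambda>m. (fst m, 0 # snd m)) P"
lemma wf_shift: "wf n P \<Longrightarrow> wf (Suc n) (shift P)" by (auto simp: wf_def shift_def)
lemma mono_shift: "mono_eval (fst m, 0 # snd m) (y # xs) = mono_eval m xs"
  unfolding mono_eval_def by (subst length_Cons, subst prod.lessThan_Suc_shift) simp

lemma eval_shift: "ipoly_eval (shift P) (y # xs) = ipoly_eval P xs"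
  unfolding eval_alt shift_def by (simp add: comp_def mono_shift)

definition sq :: "nat \<Rightarrow> ipoly \<Rightarrow> ipoly" where "sq N P = pmul N P P"

definition ratc :: "nat \<Rightarrow> rat" where
  "ratc r = of_int (int_decode (fst (prod_decode r))) / of_nat (Suc (snd (prod_decode r)))"

lemma ratc_surj: "\<exists>z. ratc z = r"
proof -
  obtain p q where pq: "quotient_of r = (p, q)" by (cases "quotient_of r")
  then have q: "q > 0" by (rule quotient_of_denom_pos)
  have "ratc (prod_encode (int_encode p, nat q - 1)) = of_int p / of_nat (nat q)"
    unfolding ratc_def using q by simp
  also have "\<dots> = of_int p / of_int q" using q by simp
  also have "\<dots> = r" using quotient_of_div[OF pq] by simp
  finally show ?thesis by blast
qed

definition lin :: "nat \<Rightarrow> nat \<Rightarrow> nat \<Rightarrow> ipoly" where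
  "lin N i r = [(int (Suc (snd (prod_decode r))), map (\<lambda>l. if l = Suc i then 1 else 0) [0..<N]),
                (- int_decode (fst (prod_decode r)), replicate N 0)]"

lemma wf_lin[simp]: "wf N (lin N i r)" by (simp add: wf_def lin_def)

lemma eval_lin: "length xs = n \<Longrightarrow> i < n \<Longrightarrow>
  ipoly_eval (lin (Suc n) i r) (y # xs) = of_nat (Suc (snd (prod_decode r))) * (xs ! i - ratc r)"
proof -
  assume a: "length xs = n" "i < n"
  have l: "length (y # xs) = Suc n" using a by simp
  have "ipoly_eval (lin (Suc n) i r) (y # xs) = of_int (int (Suc (snd (prod_decode r)))) * (y # xs) ! Suc i
      + of_int (- int_decode (fst (prod_decode r)))"
    unfolding eval_alt lin_def using mono_unit[OF l, of "Suc i"] mono_zero[OF l] a by simp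
  also have "\<dots> = xs ! i * of_nat (Suc (snd (prod_decode r))) - of_int (int_decode (fst (prod_decode r)))"
    by simp
  also have "\<dots> = of_nat (Suc (snd (prod_decode r))) * (xs ! i - ratc r)"
    unfolding ratc_def by (simp add: field_simps)
  finally show ?thesis .
qed

lemma sum_list_upt: "sum_list (map f [0..<n]) = (\<Sum>i<n. f i)"
  by (induction n) (simp_all add: upt_Suc)

definition Sp :: "nat \<Rightarrow> nat \<Rightarrow> ipoly" where
  "Sp n t = concat (map (\<lambda>i. sq (Suc n) (lin (Suc n) i (nthc t i))) [0..<n])"

lemma wf_Sp[simp]: "wf (Suc n) (Sp n t)" by (auto simp: Sp_def sq_def intro!: wf_concat)

definition pt :: "nat \<Rightarrow> nat \<Rightarrow> rat list" where "pt n t = map (\<lambda>i. ratc (nthc t i)) [0..<n]"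

lemma eval_Sp: "length xs = n \<Longrightarrow>
  ipoly_eval (Sp n t) (y # xs) = (\<Sum>i<n. (of_nat (Suc (snd (prod_decode (nthc t i)))) * (xs ! i - ratc (nthc t i)))^2)"
proof -
  assume a: "length xs = n"
  have "ipoly_eval (Sp n t) (y # xs) = sum_list (map (\<lambda>i. ipoly_eval (sq (Suc n) (lin (Suc n) i (nthc t i))) (y # xs)) [0..<n])"
    unfolding Sp_def eval_concat by (simp add: comp_def)
  also have "\<dots> = sum_list (map (\<lambda>i. (of_nat (Suc (snd (prod_decode (nthc t i)))) * (xs ! i - ratc (nthc t i)))^2) [0..<n])"
    by (rule arg_cong[where f=sum_list], rule map_cong, rule refl)
       (use a in \<open>simp add: sq_def eval_pmul eval_lin power2_eq_square\<close>)
  also have "\<dots> = (\<Sum>i<n. (of_nat (Suc (snd (prod_decode (nthc t i)))) * (xs ! i - ratc (nthc t i)))^2)"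
    by (rule sum_list_upt)
  finally show ?thesis .
qed

lemma Sp_zero: "length xs = n \<Longrightarrow> ipoly_eval (Sp n t) (y # xs) = 0 \<longleftrightarrow> xs = pt n t"
proof -
  assume a: "length xs = n"
  let ?f = "\<lambda>i. (of_nat (Suc (snd (prod_decode (nthc t i)))) * (xs ! i - ratc (nthc t i)))^2 :: rat"
  have "(\<Sum>i<n. ?f i) = 0 \<longleftrightarrow> (\<forall>i\<in>{..<n}. ?f i = 0)"
    by (rule sum_nonneg_eq_0_iff) auto
  also have "\<dots> \<longleftrightarrow> (\<forall>i<n. xs ! i = ratc (nthc t i))" by auto
  also have "\<dots> \<longleftrightarrow> xs = pt n t" using a by (auto simp: pt_def list_eq_iff_nth_eq)
  finally show ?thesis using eval_Sp[OF a] by simp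
qed

definition Pp :: "nat \<Rightarrow> nat list \<Rightarrow> ipoly" where
  "Pp n ts = foldl (\<lambda>acc t. pmul (Suc n) acc (Sp n t)) (pconst (Suc n) 1) ts"

lemma Pp_props: "wf (Suc n) (foldl (\<lambda>acc t. pmul (Suc n) acc (Sp n t)) P ts) \<and>
  (length xs = n \<longrightarrow> ipoly_eval (foldl (\<lambda>acc t. pmul (Suc n) acc (Sp n t)) P ts) (y # xs)
     = ipoly_eval P (y # xs) * prod_list (map (\<lambda>t. ipoly_eval (Sp n t) (y # xs)) ts))" if "wf (Suc n) P"
  using that
proof (induction ts arbitrary: P)
  case Nil then show ?case by simp
next
  case (Cons t ts)
  have w: "wf (Suc n) (pmul (Suc n) P (Sp n t))" by simp
  show ?case using Cons.IH[OF w] Cons.prems by (auto simp: eval_pmul)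
qed

definition Gp :: "nat \<Rightarrow> ipoly \<Rightarrow> nat list \<Rightarrow> ipoly" where
  "Gp n D ts = sq (Suc n) (shift D) @ sq (Suc n) (pmul (Suc n) (pvar (Suc n) 0) (Pp n ts) @ pconst (Suc n) (-1))"

lemma wf_Gp: "wf (Suc n) (Gp n D ts)" by (simp add: Gp_def sq_def)

lemma eval_Gp: "wf n D \<Longrightarrow> length xs = n \<Longrightarrow>
  ipoly_eval (Gp n D ts) (y # xs) = (ipoly_eval D xs)^2 + (y * prod_list (map (\<lambda>t. ipoly_eval (Sp n t) (y # xs)) ts) - 1)^2"
proof -
  assume a: "wf n D" "length xs = n"
  have wP: "wf (Suc n) (Pp n ts)" using Pp_props[of n "pconst (Suc n) 1" ts] by (simp add: Pp_def)
  have eP: "ipoly_eval (Pp n ts) (y # xs) = prod_list (map (\<lambda>t. ipoly_eval (Sp n t) (y # xs)) ts)"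
    using Pp_props[of n "pconst (Suc n) 1" ts xs y] a by (simp add: Pp_def)
  show ?thesis unfolding Gp_def sq_def
    using a wP eP wf_shift[OF a(1)]
    by (simp add: eval_pmul eval_shift eval_pvar power2_eq_square)
qed

lemma Gp_root: "wf n D \<Longrightarrow>
  (\<exists>z. length z = Suc n \<and> ipoly_eval (Gp n D ts) z = 0) \<longleftrightarrow>
  (\<exists>xs. length xs = n \<and> ipoly_eval D xs = 0 \<and> (\<forall>t\<in>set ts. xs \<noteq> pt n t))"
proof
  assume w: "wf n D"
  assume "\<exists>z. length z = Suc n \<and> ipoly_eval (Gp n D ts) z = 0"
  then obtain y xs where z: "length xs = n" "ipoly_eval (Gp n D ts) (y # xs) = 0"
    by (metis length_Suc_conv)
  let ?P = "prod_list (map (\<lambda>t. ipoly_eval (Sp n t) (y # xs)) ts)"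
  have "(ipoly_eval D xs)^2 + (y * ?P - 1)^2 = 0" using z eval_Gp[OF w z(1)] by simp
  then have d: "ipoly_eval D xs = 0" and p: "y * ?P = 1" by (auto simp: sum_power2_eq_zero_iff)
  have "\<forall>t\<in>set ts. xs \<noteq> pt n t"
  proof
    fix t assume t: "t \<in> set ts"
    have "?P \<noteq> 0" using p by auto
    then have "ipoly_eval (Sp n t) (y # xs) \<noteq> 0" using t by (auto simp: prod_list_zero_iff)
    then show "xs \<noteq> pt n t" using Sp_zero[OF z(1)] by simp
  qed
  then show "\<exists>xs. length xs = n \<and> ipoly_eval D xs = 0 \<and> (\<forall>t\<in>set ts. xs \<noteq> pt n t)" using z d by blast
next
  assume w: "wf n D"
  assume "\<exists>xs. length xs = n \<and> ipoly_eval D xs = 0 \<and> (\<forall>t\<in>set ts. xs \<noteq> pt n t)"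
  then obtain xs where x: "length xs = n" "ipoly_eval D xs = 0" "\<forall>t\<in>set ts. xs \<noteq> pt n t" by blast
  let ?P = "prod_list (map (\<lambda>t. ipoly_eval (Sp n t) (0 # xs)) ts)"
  have "?P \<noteq> 0" using x(3) Sp_zero[OF x(1)] by (auto simp: prod_list_zero_iff)
  have P': "prod_list (map (\<lambda>t. ipoly_eval (Sp n t) (y # xs)) ts) = ?P" for y
    by (rule arg_cong[where f=prod_list], rule map_cong) (auto simp: eval_Sp[OF x(1)])
  let ?y = "inverse ?P"
  have "ipoly_eval (Gp n D ts) (?y # xs) = 0"
    using eval_Gp[OF w x(1), of ts ?y] x(2) P'[of ?y] \<open>?P \<noteq> 0\<close> by simp
  then show "\<exists>z. length z = Suc n \<and> ipoly_eval (Gp n D ts) z = 0" using x(1)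
    by (intro exI[of _ "?y # xs"]) simp
qed


lemma rf_tl: "rf m X \<Longrightarrow> rf (Suc m) (\<lambda>w. X (tl w))"
  using rf_drop[of m X 1] by (simp add: drop_Suc)

lemma rf_tl2: "rf m X \<Longrightarrow> rf (Suc (Suc m)) (\<lambda>w. X (tl (tl w)))"
  using rf_drop[of m X 2] by (simp add: drop_Suc numeral_2_eq_2)

lemma rf_tab': "rf (Suc m) F \<Longrightarrow> rf m N \<Longrightarrow> (\<And>v i. length v = m \<Longrightarrow> F (i # v) = H i v) \<Longrightarrow>
  rf m (\<lambda>v. list_encode (map (\<lambda>i. H i v) [0..<N v]))"
  by (rule rf_cong[OF rf_tab]) auto

lemma rf_mapc': "rf (Suc m) F \<Longrightarrow> rf m L \<Longrightarrow> (\<And>v a. length v = m \<Longrightarrow> F (a # v) = H a v) \<Longrightarrow>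
  rf m (\<lambda>v. list_encode (map (\<lambda>a. H a v) (list_decode (L v))))"
  by (rule rf_cong[OF rf_mapc]) auto

lemma rf_sumc': "rf (Suc m) F \<Longrightarrow> rf m L \<Longrightarrow> (\<And>v a. length v = m \<Longrightarrow> F (a # v) = H a v) \<Longrightarrow>
  rf m (\<lambda>v. sum_list (map (\<lambda>a. H a v) (list_decode (L v))))"
  by (rule rf_cong[OF rf_sumc]) auto

lemma rf_bsum': "rf (Suc m) F \<Longrightarrow> rf m N \<Longrightarrow> (\<And>v i. length v = m \<Longrightarrow> F (i # v) = H i v) \<Longrightarrow>
  rf m (\<lambda>v. \<Sum>i<N v. H i v)"
  by (rule rf_cong[OF rf_bsum]) auto

lemma rf_bprod': "rf (Suc m) F \<Longrightarrow> rf m N \<Longrightarrow> (\<And>v i. length v = m \<Longrightarrow> F (i # v) = H i v) \<Longrightarrow>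
  rf m (\<lambda>v. \<Prod>i<N v. H i v)"
  by (rule rf_cong[OF rf_bprod]) auto

lemma rf_foldl'': "rf (Suc (Suc m)) G \<Longrightarrow> rf m L \<Longrightarrow> rf m A \<Longrightarrow>
  (\<And>v a acc. length v = m \<Longrightarrow> G (a # acc # v) = H a acc v) \<Longrightarrow>
  rf m (\<lambda>v. foldl (\<lambda>acc a. H a acc v) (A v) (list_decode (L v)))"
proof -
  assume G: "rf (Suc (Suc m)) G" and L: "rf m L" and A: "rf m A"
    and H: "\<And>v a acc. length v = m \<Longrightarrow> G (a # acc # v) = H a acc v"
  have "rf m (\<lambda>v. foldl (\<lambda>acc a. G (a # acc # v)) (A v) (list_decode (L v)))" by (rule rf_foldl[OF G L A])
  then show ?thesis by (rule rf_cong) (rule foldl_cong, auto simp: H)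
qed

lemma rp_allc': "rp (Suc m) P \<Longrightarrow> rf m L \<Longrightarrow> (\<And>v a. length v = m \<Longrightarrow> P (a # v) = Q a v) \<Longrightarrow>
  rp m (\<lambda>v. \<forall>a\<in>set (list_decode (L v)). Q a v)"
  unfolding rp_def by (rule rf_cong[OF rp_allc[unfolded rp_def]]) auto

section \<open>Polynomial codes\<close>

definition menc :: "int \<times> nat list \<Rightarrow> nat" where "menc m = prod_encode (int_encode (fst m), list_encode (snd m))"
definition mdec :: "nat \<Rightarrow> int \<times> nat list" where "mdec a = (int_decode (fst (prod_decode a)), list_decode (snd (prod_decode a)))"
definition enc :: "ipoly \<Rightarrow> nat" where "enc P = list_encode (map menc P)"
definition dec :: "nat \<Rightarrow> ipoly" where "dec l = map mdec (list_decode l)"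

lemma mdec_menc[simp]: "mdec (menc m) = m" by (simp add: mdec_def menc_def)
lemma menc_mdec[simp]: "menc (mdec a) = a" by (simp add: mdec_def menc_def)
lemma dec_enc[simp]: "dec (enc P) = P" by (simp add: dec_def enc_def comp_def)
lemma enc_dec[simp]: "enc (dec l) = l" by (simp add: dec_def enc_def comp_def)
lemma lc_enc: "list_decode (enc P) = map menc P" by (simp add: enc_def)

lemma decode_poly_alt: "decode_poly k = (fst (prod_decode k), dec (snd (prod_decode k)))"
  by (simp add: decode_poly_def dec_def mdec_def split: prod.splits)

definition mmulc :: "nat \<Rightarrow> nat \<Rightarrow> nat \<Rightarrow> nat" where
  "mmulc N x y = prod_encode (int_encode (int_decode (fst (prod_decode x)) * int_decode (fst (prod_decode y))),
     list_encode (map (\<lambda>i. nthc (snd (prod_decode x)) i + nthc (snd (prod_decode y)) i) [0..<N]))"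

lemma nthc_nth0: "nthc (list_encode es) i = nth0 es i" by (simp add: nthc_le nth0_def)

lemma menc_mmul: "menc (mmul N m1 m2) = mmulc N (menc m1) (menc m2)"
  by (simp add: menc_def mmul_def mmulc_def nthc_nth0)

lemma rf_mmulc[rfI]: "rf m N \<Longrightarrow> rf m X \<Longrightarrow> rf m Y \<Longrightarrow> rf m (\<lambda>v. mmulc (N v) (X v) (Y v))"
proof -
  assume N: "rf m N" and X: "rf m X" and Y: "rf m Y"
  have T: "rf m (\<lambda>v. list_encode (map (\<lambda>i. nthc (snd (prod_decode (X v))) i + nthc (snd (prod_decode (Y v))) i) [0..<N v]))"
    by (rule rf_tab'[where F="\<lambda>w. nthc (snd (prod_decode (X (tl w)))) (w!0) + nthc (snd (prod_decode (Y (tl w)))) (w!0)"])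
       (auto intro!: rfI rf_tl X Y N)
  show ?thesis unfolding mmulc_def by (intro rfI T X Y)
qed

definition pmulc :: "nat \<Rightarrow> nat \<Rightarrow> nat \<Rightarrow> nat" where
  "pmulc N a b = list_encode (concat (map list_decode (map (\<lambda>x. list_encode (map (\<lambda>y. mmulc N x y) (list_decode b))) (list_decode a))))"

lemma enc_pmul: "enc (pmul N P Q) = pmulc N (enc P) (enc Q)"
  by (simp add: enc_def pmul_def pmulc_def map_concat comp_def menc_mmul)

lemma rf_pmulc[rfI]: "rf m N \<Longrightarrow> rf m A \<Longrightarrow> rf m B \<Longrightarrow> rf m (\<lambda>v. pmulc (N v) (A v) (B v))"
proof -
  assume N: "rf m N" and A: "rf m A" and B: "rf m B"
  have inner: "rf (Suc m) (\<lambda>w. list_encode (map (\<lambda>y. mmulc (N (tl w)) (w!0) y) (list_decode (B (tl w)))))"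
    by (rule rf_mapc'[where F="\<lambda>u. mmulc (N (tl (tl u))) (u!Suc 0) (u!0)"])
       (auto intro!: rfI rf_tl rf_tl2 N B)
  have outer: "rf m (\<lambda>v. list_encode (map (\<lambda>x. list_encode (map (\<lambda>y. mmulc (N v) x y) (list_decode (B v)))) (list_decode (A v))))"
    by (rule rf_mapc'[OF inner A]) simp
  show ?thesis unfolding pmulc_def using rf_concatc[OF outer] by simp
qed

definition zerosc :: "nat \<Rightarrow> nat" where "zerosc N = list_encode (map (\<lambda>i. 0) [0..<N])"
lemma zerosc_eq: "zerosc N = list_encode (replicate N 0)" by (simp add: zerosc_def map_replicate_const)
lemma rf_zerosc[rfI]: "rf m N \<Longrightarrow> rf m (\<lambda>v. zerosc (N v))"
  unfolding zerosc_def by (rule rf_tab'[where F="\<lambda>_. 0"]) (auto intro: rfI)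

definition unitc :: "nat \<Rightarrow> nat \<Rightarrow> nat" where "unitc N j = list_encode (map (\<lambda>i. if i = j then 1 else 0) [0..<N])"
lemma rf_unitc[rfI]: "rf m N \<Longrightarrow> rf m J \<Longrightarrow> rf m (\<lambda>v. unitc (N v) (J v))"
  unfolding unitc_def
  by (rule rf_tab'[where F="\<lambda>w. if w!0 = J (tl w) then 1 else 0"]) (auto intro!: rfI rf_tl)

definition pconstc :: "nat \<Rightarrow> nat \<Rightarrow> nat" where "pconstc N z = consc (prod_encode (z, zerosc N)) 0"
lemma enc_pconst: "enc (pconst N c) = pconstc N (int_encode c)"
  by (simp add: enc_def pconst_def pconstc_def menc_def zerosc_eq consc_def)
lemma rf_pconstc[rfI]: "rf m N \<Longrightarrow> rf m Z \<Longrightarrow> rf m (\<lambda>v. pconstc (N v) (Z v))"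
  unfolding pconstc_def by (intro rfI)

definition pvarc :: "nat \<Rightarrow> nat \<Rightarrow> nat" where "pvarc N j = consc (prod_encode (int_encode 1, unitc N j)) 0"
lemma enc_pvar: "enc (pvar N j) = pvarc N j"
  by (simp add: enc_def pvar_def pvarc_def menc_def unitc_def consc_def)
lemma rf_pvarc[rfI]: "rf m N \<Longrightarrow> rf m J \<Longrightarrow> rf m (\<lambda>v. pvarc (N v) (J v))"
  unfolding pvarc_def by (intro rfI)

definition appc :: "nat \<Rightarrow> nat \<Rightarrow> nat" where "appc a b = list_encode (list_decode a @ list_decode b)"
lemma enc_append: "enc (P @ Q) = appc (enc P) (enc Q)" by (simp add: enc_def appc_def)
lemma rf_appc[rfI]: "rf m A \<Longrightarrow> rf m B \<Longrightarrow> rf m (\<lambda>v. appc (A v) (B v))"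
  unfolding appc_def by (rule rf_app)

definition shiftc :: "nat \<Rightarrow> nat" where
  "shiftc a = list_encode (map (\<lambda>x. prod_encode (fst (prod_decode x), consc 0 (snd (prod_decode x)))) (list_decode a))"
lemma enc_shift: "enc (shift P) = shiftc (enc P)"
  by (simp add: enc_def shift_def shiftc_def menc_def comp_def)
lemma rf_shiftc[rfI]: "rf m A \<Longrightarrow> rf m (\<lambda>v. shiftc (A v))"
  unfolding shiftc_def
  by (rule rf_mapc'[where F="\<lambda>w. prod_encode (fst (prod_decode (w!0)), consc 0 (snd (prod_decode (w!0))))"])
     (auto intro!: rfI)

definition linc :: "nat \<Rightarrow> nat \<Rightarrow> nat \<Rightarrow> nat" where
  "linc N i r = consc (prod_encode (int_encode (int (Suc (snd (prod_decode r)))), unitc N (Suc i)))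
     (consc (prod_encode (int_encode (- int_decode (fst (prod_decode r))), zerosc N)) 0)"
lemma enc_lin: "enc (lin N i r) = linc N i r"
  by (simp add: enc_def lin_def linc_def menc_def unitc_def zerosc_eq consc_def)
lemma rf_linc[rfI]: "rf m N \<Longrightarrow> rf m I \<Longrightarrow> rf m R \<Longrightarrow> rf m (\<lambda>v. linc (N v) (I v) (R v))"
  unfolding linc_def by (intro rfI)

lemma enc_concat: "enc (concat Ps) = list_encode (concat (map list_decode (map enc Ps)))"
  by (simp add: enc_def map_concat comp_def)

definition Spc :: "nat \<Rightarrow> nat \<Rightarrow> nat" where
  "Spc n t = list_encode (concat (map list_decode (map (\<lambda>i. pmulc (Suc n) (linc (Suc n) i (nthc t i)) (linc (Suc n) i (nthc t i))) [0..<n])))"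
lemma enc_Sp: "enc (Sp n t) = Spc n t"
  by (simp add: Sp_def Spc_def enc_concat sq_def enc_pmul enc_lin comp_def)
lemma rf_Spc[rfI]: "rf m N \<Longrightarrow> rf m T \<Longrightarrow> rf m (\<lambda>v. Spc (N v) (T v))"
proof -
  assume N: "rf m N" and T: "rf m T"
  have "rf m (\<lambda>v. list_encode (map (\<lambda>i. pmulc (Suc (N v)) (linc (Suc (N v)) i (nthc (T v) i)) (linc (Suc (N v)) i (nthc (T v) i))) [0..<N v]))"
    by (rule rf_tab'[where F="\<lambda>w. pmulc (Suc (N (tl w))) (linc (Suc (N (tl w))) (w!0) (nthc (T (tl w)) (w!0))) (linc (Suc (N (tl w))) (w!0) (nthc (T (tl w)) (w!0)))"])
       (auto intro!: rfI rf_tl N T)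
  from rf_concatc[OF this] show ?thesis unfolding Spc_def by simp
qed

definition Ppc :: "nat \<Rightarrow> nat \<Rightarrow> nat" where
  "Ppc n j = foldl (\<lambda>acc t. pmulc (Suc n) acc (Spc n t)) (pconstc (Suc n) (int_encode 1)) (list_decode j)"

lemma enc_Pp_aux: "enc (foldl (\<lambda>acc t. pmul (Suc n) acc (Sp n t)) P ts) = foldl (\<lambda>acc t. pmulc (Suc n) acc (Spc n t)) (enc P) ts"
  by (induction ts arbitrary: P) (simp_all add: enc_pmul enc_Sp)

lemma enc_Pp: "enc (Pp n ts) = Ppc n (list_encode ts)"
  by (simp add: Pp_def Ppc_def enc_Pp_aux enc_pconst)

lemma rf_Ppc[rfI]: "rf m N \<Longrightarrow> rf m J \<Longrightarrow> rf m (\<lambda>v. Ppc (N v) (J v))"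
  unfolding Ppc_def
  by (rule rf_foldl''[where G="\<lambda>w. pmulc (Suc (N (tl (tl w)))) (w!Suc 0) (Spc (N (tl (tl w))) (w!0))"])
     (auto intro!: rfI rf_tl2)

definition Gpc :: "nat \<Rightarrow> nat \<Rightarrow> nat \<Rightarrow> nat" where
  "Gpc n d j = appc (pmulc (Suc n) (shiftc d) (shiftc d))
     (pmulc (Suc n) (appc (pmulc (Suc n) (pvarc (Suc n) 0) (Ppc n j)) (pconstc (Suc n) (int_encode (-1))))
                    (appc (pmulc (Suc n) (pvarc (Suc n) 0) (Ppc n j)) (pconstc (Suc n) (int_encode (-1)))))"

lemma enc_Gp: "enc (Gp n D ts) = Gpc n (enc D) (list_encode ts)"
  by (simp add: Gp_def Gpc_def sq_def enc_append enc_pmul enc_shift enc_pvar enc_Pp enc_pconst)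

lemma rf_Gpc[rfI]: "rf m N \<Longrightarrow> rf m D \<Longrightarrow> rf m J \<Longrightarrow> rf m (\<lambda>v. Gpc (N v) (D v) (J v))"
  unfolding Gpc_def by (intro rfI)


lemma valid_alt: "valid_code k \<longleftrightarrow> 1 \<le> fst (prod_decode k) \<and>
  (\<forall>a\<in>set (list_decode (snd (prod_decode k))). length (list_decode (snd (prod_decode a))) = fst (prod_decode k))"
  by (auto simp: valid_code_def decode_poly_alt dec_def mdec_def)

lemma rp_valid[rfI]: "rf m K \<Longrightarrow> rp m (\<lambda>v. valid_code (K v))"
proof -
  assume K: "rf m K"
  have "rp m (\<lambda>v. \<forall>a\<in>set (list_decode (snd (prod_decode (K v)))). length (list_decode (snd (prod_decode a))) = fst (prod_decode (K v)))"
    by (rule rp_allc'[where P="\<lambda>w. length (list_decode (snd (prod_decode (w!0)))) = fst (prod_decode (K (tl w)))"])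
       (auto intro!: rfI rf_tl K)
  then have "rp m (\<lambda>v. 1 \<le> fst (prod_decode (K v)) \<and> (\<forall>a\<in>set (list_decode (snd (prod_decode (K v)))). length (list_decode (snd (prod_decode a))) = fst (prod_decode (K v))))"
    by (intro rp_and rp_le rf_const rf_fst_pd K)
  then show ?thesis by (simp add: valid_alt)
qed

lemma valid_decode: "valid_code k \<longleftrightarrow> 1 \<le> fst (decode_poly k) \<and> wf (fst (decode_poly k)) (snd (decode_poly k))"
  by (auto simp: valid_code_def wf_def split: prod.splits)

lemma valid_wf: "valid_code k \<Longrightarrow> wf (fst (prod_decode k)) (dec (snd (prod_decode k)))"
  by (auto simp: valid_alt wf_def dec_def mdec_def)

lemma rat_solutions_alt: "rat_solutions k = {xs. length xs = fst (prod_decode k) \<and> ipoly_eval (dec (snd (prod_decode k))) xs = 0}"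
  by (simp add: rat_solutions_def decode_poly_alt)

lemma valid_code_alt2: "valid_code k \<longleftrightarrow> 1 \<le> fst (prod_decode k) \<and> wf (fst (prod_decode k)) (dec (snd (prod_decode k)))"
  by (auto simp: valid_alt wf_def dec_def mdec_def)

lemma nth_le_code: "i < length (list_decode l) \<Longrightarrow> list_decode l ! i \<le> l"
proof (induction l arbitrary: i rule: list_decode.induct)
  case 1 then show ?case by simp
next
  case (2 n)
  obtain x y where xy: "prod_decode n = (x, y)" by (cases "prod_decode n")
  have x: "x \<le> n" and y: "y \<le> n" using xy by (metis le_prod_encode_1 prod_decode_inverse, metis le_prod_encode_2 prod_decode_inverse)
  show ?case
  proof (cases i)
    case 0 then show ?thesis using xy x by simp
  next
    case (Suc i')
    then have "i' < length (list_decode y)" using 2(2) xy by simp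
    then have "list_decode y ! i' \<le> y" using 2(1)[OF xy[symmetric]] by blast
    then show ?thesis using Suc xy y by simp
  qed
qed

lemma set_le_code: "a \<in> set (list_decode l) \<Longrightarrow> a \<le> l"
  by (metis in_set_conv_nth nth_le_code)

lemma snd_pd_le: "snd (prod_decode k) \<le> k" by (metis le_prod_encode_2 prod_decode_inverse surjective_pairing)
lemma fst_pd_le: "fst (prod_decode k) \<le> k" by (metis le_prod_encode_1 prod_decode_inverse surjective_pairing)

lemma exp_bound: "a \<in> set (list_decode (snd (prod_decode k))) \<Longrightarrow> i < length (list_decode (snd (prod_decode a))) \<Longrightarrow>
  list_decode (snd (prod_decode a)) ! i \<le> k"
proof -
  assume a: "a \<in> set (list_decode (snd (prod_decode k)))" "i < length (list_decode (snd (prod_decode a)))"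
  have "list_decode (snd (prod_decode a)) ! i \<le> snd (prod_decode a)" by (rule nth_le_code[OF a(2)])
  also have "\<dots> \<le> a" by (rule snd_pd_le)
  also have "\<dots> \<le> snd (prod_decode k)" by (rule set_le_code[OF a(1)])
  also have "\<dots> \<le> k" by (rule snd_pd_le)
  finally show ?thesis .
qed

section \<open>Evaluation test\<close>

definition magm :: "nat \<Rightarrow> nat \<Rightarrow> nat \<Rightarrow> nat \<Rightarrow> nat" where
  "magm k n j a = imag (fst (prod_decode a)) * (\<Prod>i<n. imag (fst (prod_decode (nthc j i))) ^ nthc (snd (prod_decode a)) i
      * Suc (snd (prod_decode (nthc j i))) ^ (k - nthc (snd (prod_decode a)) i))"

definition negm :: "nat \<Rightarrow> nat \<Rightarrow> nat \<Rightarrow> nat" where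
  "negm n j a = (if odd (fst (prod_decode a)) then 1 else 0) + (\<Sum>i<n. if odd (fst (prod_decode (nthc j i))) then nthc (snd (prod_decode a)) i else 0)"

definition Wc :: "nat \<Rightarrow> nat \<Rightarrow> bool" where
  "Wc k j \<longleftrightarrow> valid_code k \<and> length (list_decode j) = fst (prod_decode k) \<and>
     sum_list (map (\<lambda>a. if even (negm (fst (prod_decode k)) j a) then magm k (fst (prod_decode k)) j a else 0) (list_decode (snd (prod_decode k))))
   = sum_list (map (\<lambda>a. if odd (negm (fst (prod_decode k)) j a) then magm k (fst (prod_decode k)) j a else 0) (list_decode (snd (prod_decode k))))"

lemma rf_magm[rfI]: "rf m K \<Longrightarrow> rf m N \<Longrightarrow> rf m J \<Longrightarrow> rf m A \<Longrightarrow> rf m (\<lambda>v. magm (K v) (N v) (J v) (A v))"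
proof -
  assume K: "rf m K" and N: "rf m N" and J: "rf m J" and A: "rf m A"
  have "rf m (\<lambda>v. \<Prod>i<N v. imag (fst (prod_decode (nthc (J v) i))) ^ nthc (snd (prod_decode (A v))) i
      * Suc (snd (prod_decode (nthc (J v) i))) ^ (K v - nthc (snd (prod_decode (A v))) i))"
    by (rule rf_bprod'[where F="\<lambda>w. imag (fst (prod_decode (nthc (J (tl w)) (w!0)))) ^ nthc (snd (prod_decode (A (tl w)))) (w!0)
      * Suc (snd (prod_decode (nthc (J (tl w)) (w!0)))) ^ (K (tl w) - nthc (snd (prod_decode (A (tl w)))) (w!0))"])
       (auto intro!: rfI rf_tl K J A N)
  then show ?thesis unfolding magm_def by (intro rfI A)
qed

lemma rf_negm[rfI]: "rf m N \<Longrightarrow> rf m J \<Longrightarrow> rf m A \<Longrightarrow> rf m (\<lambda>v. negm (N v) (J v) (A v))"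
proof -
  assume N: "rf m N" and J: "rf m J" and A: "rf m A"
  have "rf m (\<lambda>v. \<Sum>i<N v. if odd (fst (prod_decode (nthc (J v) i))) then nthc (snd (prod_decode (A v))) i else 0)"
    by (rule rf_bsum'[where F="\<lambda>w. if odd (fst (prod_decode (nthc (J (tl w)) (w!0)))) then nthc (snd (prod_decode (A (tl w)))) (w!0) else 0"])
       (auto intro!: rfI rf_tl J A N)
  then show ?thesis unfolding negm_def by (intro rfI A)
qed

lemma rp_Wc[rfI]: "rf m K \<Longrightarrow> rf m J \<Longrightarrow> rp m (\<lambda>v. Wc (K v) (J v))"
proof -
  assume K: "rf m K" and J: "rf m J"
  have s1: "rf m (\<lambda>v. sum_list (map (\<lambda>a. if even (negm (fst (prod_decode (K v))) (J v) a) then magm (K v) (fst (prod_decode (K v))) (J v) a else 0) (list_decode (snd (prod_decode (K v))))))"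
    by (rule rf_sumc'[where F="\<lambda>w. if even (negm (fst (prod_decode (K (tl w)))) (J (tl w)) (w!0)) then magm (K (tl w)) (fst (prod_decode (K (tl w)))) (J (tl w)) (w!0) else 0"])
       (auto intro!: rfI rf_tl J K)
  have s2: "rf m (\<lambda>v. sum_list (map (\<lambda>a. if odd (negm (fst (prod_decode (K v))) (J v) a) then magm (K v) (fst (prod_decode (K v))) (J v) a else 0) (list_decode (snd (prod_decode (K v))))))"
    by (rule rf_sumc'[where F="\<lambda>w. if odd (negm (fst (prod_decode (K (tl w)))) (J (tl w)) (w!0)) then magm (K (tl w)) (fst (prod_decode (K (tl w)))) (J (tl w)) (w!0) else 0"])
       (auto intro!: rfI rf_tl J K)
  show ?thesis unfolding Wc_def by (intro rfI s1 s2 K J)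
qed

lemma int_decode_sign: "int_decode z = (-1) ^ (if odd z then 1 else 0) * int (imag z)"
  by (simp add: int_decode_imag)

lemma scale_factor: "e \<le> k \<Longrightarrow> (B::rat) \<noteq> 0 \<Longrightarrow> (A / B) ^ e * B ^ k = A ^ e * B ^ (k - e)"
proof -
  assume e: "e \<le> k" and B: "B \<noteq> 0"
  have "B ^ k = B ^ e * B ^ (k - e)" using e by (simp add: power_add[symmetric])
  then show ?thesis using B by (simp add: power_divide field_simps)
qed

lemma sum_sign: "sum_list (map (\<lambda>a. (-1::int) ^ (g a) * int (f a)) ms) =
  int (sum_list (map (\<lambda>a. if even (g a) then f a else 0) ms)) - int (sum_list (map (\<lambda>a. if odd (g a) then f a else 0) ms))"
  by (induction ms) auto

lemma mono_term: "length xs = n \<Longrightarrow> (\<forall>i<n. xs ! i = ratc (nthc j i)) \<Longrightarrow>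
  length (list_decode (snd (prod_decode a))) = n \<Longrightarrow> (\<forall>i<n. list_decode (snd (prod_decode a)) ! i \<le> k) \<Longrightarrow>
  mono_eval (mdec a) xs * (\<Prod>i<n. (of_nat (Suc (snd (prod_decode (nthc j i)))) :: rat) ^ k)
   = of_int ((-1) ^ negm n j a * int (magm k n j a))"
proof -
  assume l: "length xs = n" and x: "\<forall>i<n. xs ! i = ratc (nthc j i)"
    and le: "length (list_decode (snd (prod_decode a))) = n" and b: "\<forall>i<n. list_decode (snd (prod_decode a)) ! i \<le> k"
  let ?es = "list_decode (snd (prod_decode a))"
  let ?A = "\<lambda>i. int_decode (fst (prod_decode (nthc j i)))"
  let ?B = "\<lambda>i. Suc (snd (prod_decode (nthc j i)))"
  have ne: "nthc (snd (prod_decode a)) i = ?es ! i" if "i < n" for i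
    using nthc_le[of ?es i] le that by simp
  have "mono_eval (mdec a) xs * (\<Prod>i<n. (of_nat (?B i) :: rat) ^ k)
      = of_int (int_decode (fst (prod_decode a))) * ((\<Prod>i<n. (of_int (?A i) / of_nat (?B i)) ^ (?es ! i)) * (\<Prod>i<n. (of_nat (?B i) :: rat) ^ k))"
    unfolding mono_eval_def mdec_def using l x by (simp add: ratc_def)
  also have "(\<Prod>i<n. (of_int (?A i) / of_nat (?B i)) ^ (?es ! i)) * (\<Prod>i<n. (of_nat (?B i) :: rat) ^ k)
      = (\<Prod>i<n. of_int (?A i) ^ (?es ! i) * (of_nat (?B i) :: rat) ^ (k - ?es ! i))"
    unfolding prod.distrib[symmetric] by (rule prod.cong[OF refl]) (use b in \<open>simp add: scale_factor\<close>)
  also have "\<dots> = of_int (\<Prod>i<n. ?A i ^ (?es ! i) * int (?B i) ^ (k - ?es ! i))" by simp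
  finally have e1: "mono_eval (mdec a) xs * (\<Prod>i<n. (of_nat (?B i) :: rat) ^ k)
     = of_int (int_decode (fst (prod_decode a)) * (\<Prod>i<n. ?A i ^ (?es ! i) * int (?B i) ^ (k - ?es ! i)))" by simp
  have fac: "?A i ^ (?es ! i) * int (?B i) ^ (k - ?es ! i) =
     (-1) ^ (if odd (fst (prod_decode (nthc j i))) then ?es ! i else 0) *
     int (imag (fst (prod_decode (nthc j i))) ^ (?es ! i) * ?B i ^ (k - ?es ! i))" for i
    unfolding int_decode_sign by (simp add: power_mult_distrib power_mult[symmetric])
  have "(\<Prod>i<n. ?A i ^ (?es ! i) * int (?B i) ^ (k - ?es ! i)) =
     (\<Prod>i<n. (-1) ^ (if odd (fst (prod_decode (nthc j i))) then ?es ! i else 0)) *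
     (\<Prod>i<n. int (imag (fst (prod_decode (nthc j i))) ^ (?es ! i) * ?B i ^ (k - ?es ! i)))"
    unfolding fac prod.distrib ..
  also have "\<dots> = (-1) ^ (\<Sum>i<n. if odd (fst (prod_decode (nthc j i))) then ?es ! i else 0) *
     int (\<Prod>i<n. imag (fst (prod_decode (nthc j i))) ^ (?es ! i) * ?B i ^ (k - ?es ! i))"
    by (simp add: power_sum)
  finally have e2: "(\<Prod>i<n. ?A i ^ (?es ! i) * int (?B i) ^ (k - ?es ! i)) = \<dots>" .
  have e3: "(\<Sum>i<n. if odd (fst (prod_decode (nthc j i))) then ?es ! i else 0) =
      (\<Sum>i<n. if odd (fst (prod_decode (nthc j i))) then nthc (snd (prod_decode a)) i else 0)"
    by (rule sum.cong[OF refl]) (simp add: ne)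
  have e4: "(\<Prod>i<n. imag (fst (prod_decode (nthc j i))) ^ (?es ! i) * ?B i ^ (k - ?es ! i)) =
      (\<Prod>i<n. imag (fst (prod_decode (nthc j i))) ^ nthc (snd (prod_decode a)) i * ?B i ^ (k - nthc (snd (prod_decode a)) i))"
    by (rule prod.cong[OF refl]) (simp add: ne)
  have "int_decode (fst (prod_decode a)) * (\<Prod>i<n. ?A i ^ (?es ! i) * int (?B i) ^ (k - ?es ! i))
     = (-1) ^ negm n j a * int (magm k n j a)"
    unfolding e2 e3 e4 negm_def magm_def by (subst int_decode_sign) (simp add: power_add)
  then show ?thesis using e1 by simp
qed

lemma Wc_iff: "valid_code k \<Longrightarrow> Wc k j \<longleftrightarrow> length (list_decode j) = fst (prod_decode k) \<and>
   ipoly_eval (dec (snd (prod_decode k))) (map ratc (list_decode j)) = 0"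
proof -
  assume v: "valid_code k"
  let ?n = "fst (prod_decode k)" and ?ms = "list_decode (snd (prod_decode k))"
  show ?thesis
  proof (cases "length (list_decode j) = ?n")
    case False then show ?thesis by (simp add: Wc_def)
  next
    case True
    let ?xs = "map ratc (list_decode j)"
    let ?B = "(\<Prod>i<?n. (of_nat (Suc (snd (prod_decode (nthc j i)))) :: rat) ^ k)"
    have l: "length ?xs = ?n" using True by simp
    have x: "\<forall>i<?n. ?xs ! i = ratc (nthc j i)"
      using True nthc_le[of "list_decode j"] by simp
    have B: "?B \<noteq> 0" by simp
    have "ipoly_eval (dec (snd (prod_decode k))) ?xs * ?B = sum_list (map (\<lambda>a. mono_eval (mdec a) ?xs * ?B) ?ms)"
      by (simp add: eval_alt dec_def comp_def sum_list_mult_const)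
    also have "\<dots> = sum_list (map (\<lambda>a. of_int ((-1) ^ negm ?n j a * int (magm k ?n j a))) ?ms)"
    proof (rule arg_cong[where f=sum_list], rule map_cong[OF refl])
      fix a assume a: "a \<in> set ?ms"
      have la: "length (list_decode (snd (prod_decode a))) = ?n" using v a by (simp add: valid_alt)
      have ba: "\<forall>i<?n. list_decode (snd (prod_decode a)) ! i \<le> k" using exp_bound[OF a] la by simp
      show "mono_eval (mdec a) ?xs * ?B = of_int ((-1) ^ negm ?n j a * int (magm k ?n j a))"
        by (rule mono_term[OF l x la ba])
    qed
    also have "\<dots> = of_int (sum_list (map (\<lambda>a. (-1) ^ negm ?n j a * int (magm k ?n j a)) ?ms))"
      using sum_list_of_int[of "map (\<lambda>a. (-1) ^ negm ?n j a * int (magm k ?n j a)) ?ms"] by (simp add: comp_def)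
    also have "\<dots> = of_int (int (sum_list (map (\<lambda>a. if even (negm ?n j a) then magm k ?n j a else 0) ?ms))
       - int (sum_list (map (\<lambda>a. if odd (negm ?n j a) then magm k ?n j a else 0) ?ms)))"
      by (simp only: sum_sign)
    finally have e: "ipoly_eval (dec (snd (prod_decode k))) ?xs * ?B = \<dots>" .
    have "ipoly_eval (dec (snd (prod_decode k))) ?xs = 0 \<longleftrightarrow> ipoly_eval (dec (snd (prod_decode k))) ?xs * ?B = 0"
      using B by simp
    also have "\<dots> \<longleftrightarrow> sum_list (map (\<lambda>a. if even (negm ?n j a) then magm k ?n j a else 0) ?ms)
       = sum_list (map (\<lambda>a. if odd (negm ?n j a) then magm k ?n j a else 0) ?ms)"
      unfolding e by simp
    finally show ?thesis using v True by (simp add: Wc_def)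
  qed
qed

lemma codes_exist: "\<exists>zs. map ratc zs = xs"
proof (induction xs)
  case Nil then show ?case by simp
next
  case (Cons x xs)
  then obtain zs where "map ratc zs = xs" by blast
  moreover obtain z where "ratc z = x" using ratc_surj by blast
  ultimately show ?case by (intro exI[of _ "z # zs"]) simp
qed

lemma S_iff: "k \<in> has_rat_solution_set \<longleftrightarrow> (\<exists>j. Wc k j)"
proof
  assume "k \<in> has_rat_solution_set"
  then have v: "valid_code k" and "rat_solutions k \<noteq> {}" by (auto simp: has_rat_solution_set_def)
  then obtain xs where xs: "length xs = fst (prod_decode k)" "ipoly_eval (dec (snd (prod_decode k))) xs = 0"
    by (auto simp: rat_solutions_alt)
  obtain zs where zs: "map ratc zs = xs" using codes_exist by blast
  have "Wc k (list_encode zs)" using Wc_iff[OF v] xs zs by auto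
  then show "\<exists>j. Wc k j" by blast
next
  assume "\<exists>j. Wc k j"
  then obtain j where w: "Wc k j" by blast
  then have v: "valid_code k" by (simp add: Wc_def)
  have "map ratc (list_decode j) \<in> rat_solutions k" using Wc_iff[OF v] w by (simp add: rat_solutions_alt)
  then show "k \<in> has_rat_solution_set" using v by (auto simp: has_rat_solution_set_def)
qed

section \<open>The dummy-variable transformation\<close>

definition fc :: "nat \<Rightarrow> nat" where "fc k = prod_encode (Suc (fst (prod_decode k)), shiftc (snd (prod_decode k)))"

lemma rf_fc[rfI]: "rf m K \<Longrightarrow> rf m (\<lambda>v. fc (K v))" unfolding fc_def by (intro rfI)

lemma decode_fc: "decode_poly (fc k) = (Suc (fst (prod_decode k)), shift (dec (snd (prod_decode k))))"
proof -
  have "shiftc (snd (prod_decode k)) = enc (shift (dec (snd (prod_decode k))))"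
    by (simp add: enc_shift)
  then show ?thesis by (simp add: fc_def decode_poly_alt)
qed

lemma fc_Fin: "valid_code k \<Longrightarrow> fc k \<in> fin_rat_solutions_set \<longleftrightarrow> rat_solutions k = {}"
proof -
  assume v: "valid_code k"
  let ?n = "fst (prod_decode k)" and ?D = "dec (snd (prod_decode k))"
  have w: "wf ?n ?D" using valid_wf[OF v] .
  have vf: "valid_code (fc k)" using wf_shift[OF w] by (simp add: valid_decode decode_fc)
  have rs: "rat_solutions (fc k) = {z. \<exists>y xs. z = y # xs \<and> xs \<in> rat_solutions k}"
  proof (rule set_eqI)
    fix z
    show "z \<in> rat_solutions (fc k) \<longleftrightarrow> z \<in> {z. \<exists>y xs. z = y # xs \<and> xs \<in> rat_solutions k}"
    proof -
      have r1: "rat_solutions (fc k) = {xs. length xs = Suc ?n \<and> ipoly_eval (shift ?D) xs = 0}"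
        by (simp add: rat_solutions_def decode_fc)
      show ?thesis unfolding r1 by (cases z) (auto simp: eval_shift rat_solutions_alt)
    qed
  qed
  show ?thesis
  proof
    assume "fc k \<in> fin_rat_solutions_set"
    then have f: "finite (rat_solutions (fc k))" by (simp add: fin_rat_solutions_set_def)
    show "rat_solutions k = {}"
    proof (rule ccontr)
      assume "rat_solutions k \<noteq> {}"
      then obtain xs where xs: "xs \<in> rat_solutions k" by blast
      have "range (\<lambda>y::rat. y # xs) \<subseteq> rat_solutions (fc k)" using xs rs by auto
      moreover have "infinite (range (\<lambda>y::rat. y # xs))"
      proof
        assume "finite (range (\<lambda>y::rat. y # xs))"
        then have "finite (UNIV :: rat set)" by (rule finite_imageD) (simp add: inj_on_def)
        then show False using infinite_UNIV_char_0 by blast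
      qed
      ultimately show False using f finite_subset by blast
    qed
  next
    assume "rat_solutions k = {}"
    then have "rat_solutions (fc k) = {}" using rs by simp
    then show "fc k \<in> fin_rat_solutions_set" using vf by (simp add: fin_rat_solutions_set_def)
  qed
qed

section \<open>The exclusion transformation\<close>

definition gc :: "nat \<Rightarrow> nat \<Rightarrow> nat" where
  "gc k j = prod_encode (Suc (fst (prod_decode k)), Gpc (fst (prod_decode k)) (snd (prod_decode k)) j)"

lemma rf_gc[rfI]: "rf m K \<Longrightarrow> rf m J \<Longrightarrow> rf m (\<lambda>v. gc (K v) (J v))" unfolding gc_def by (intro rfI)

lemma decode_gc: "decode_poly (gc k j) = (Suc (fst (prod_decode k)), Gp (fst (prod_decode k)) (dec (snd (prod_decode k))) (list_decode j))"
proof -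
  have "Gpc (fst (prod_decode k)) (snd (prod_decode k)) j = enc (Gp (fst (prod_decode k)) (dec (snd (prod_decode k))) (list_decode j))"
    by (simp add: enc_Gp)
  then show ?thesis by (simp add: gc_def decode_poly_alt)
qed

lemma gc_notS: "valid_code k \<Longrightarrow> gc k j \<notin> has_rat_solution_set \<longleftrightarrow>
  (\<forall>xs\<in>rat_solutions k. \<exists>t\<in>set (list_decode j). xs = pt (fst (prod_decode k)) t)"
proof -
  assume v: "valid_code k"
  let ?n = "fst (prod_decode k)" and ?D = "dec (snd (prod_decode k))"
  have w: "wf ?n ?D" using valid_wf[OF v] .
  have vg: "valid_code (gc k j)"
    using wf_Gp[of ?n ?D "list_decode j"] by (simp add: valid_decode decode_gc)
  have "gc k j \<in> has_rat_solution_set \<longleftrightarrow> (\<exists>z. length z = Suc ?n \<and> ipoly_eval (Gp ?n ?D (list_decode j)) z = 0)"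
    using vg by (auto simp: has_rat_solution_set_def rat_solutions_def decode_gc)
  also have "\<dots> \<longleftrightarrow> (\<exists>xs. length xs = ?n \<and> ipoly_eval ?D xs = 0 \<and> (\<forall>t\<in>set (list_decode j). xs \<noteq> pt ?n t))"
    by (rule Gp_root[OF w])
  finally show ?thesis by (auto simp: rat_solutions_alt)
qed

lemma Fin_iff: "k \<in> fin_rat_solutions_set \<longleftrightarrow> valid_code k \<and> (\<exists>j. gc k j \<notin> has_rat_solution_set)"
proof
  assume "k \<in> fin_rat_solutions_set"
  then have v: "valid_code k" and f: "finite (rat_solutions k)" by (auto simp: fin_rat_solutions_set_def)
  let ?n = "fst (prod_decode k)"
  obtain L where L: "set L = rat_solutions k" using finite_list[OF f] by blast
  have "\<forall>xs\<in>set L. \<exists>t. pt ?n t = xs"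
  proof
    fix xs assume "xs \<in> set L"
    then have l: "length xs = ?n" using L by (auto simp: rat_solutions_alt)
    obtain zs where zs: "map ratc zs = xs" using codes_exist by blast
    have "pt ?n (list_encode zs) = xs"
      unfolding pt_def using zs l by (auto simp: nthc_le list_eq_iff_nth_eq)
    then show "\<exists>t. pt ?n t = xs" by blast
  qed
  then obtain tf where tf: "\<forall>xs\<in>set L. pt ?n (tf xs) = xs" by metis
  let ?j = "list_encode (map tf L)"
  have "\<forall>xs\<in>rat_solutions k. \<exists>t\<in>set (list_decode ?j). xs = pt ?n t"
    using tf L by force
  then have "gc k ?j \<notin> has_rat_solution_set" using gc_notS[OF v] by blast
  then show "valid_code k \<and> (\<exists>j. gc k j \<notin> has_rat_solution_set)" using v by blast
next
  assume "valid_code k \<and> (\<exists>j. gc k j \<notin> has_rat_solution_set)"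
  then obtain j where v: "valid_code k" and g: "gc k j \<notin> has_rat_solution_set" by blast
  have "rat_solutions k \<subseteq> pt (fst (prod_decode k)) ` set (list_decode j)"
    using gc_notS[OF v] g by blast
  then have "finite (rat_solutions k)" by (rule finite_subset) simp
  then show "k \<in> fin_rat_solutions_set" using v by (simp add: fin_rat_solutions_set_def)
qed


lemma dirB: "recursive_set has_rat_solution_set \<Longrightarrow> re_set fin_rat_solutions_set"
proof -
  assume "recursive_set has_rat_solution_set"
  then have chi: "rf (Suc 0) (\<lambda>v. if v!0 \<in> has_rat_solution_set then 1 else 0)" by (simp add: recursive_iff)
  have c2: "rf (Suc (Suc 0)) (\<lambda>v. (\<lambda>v. if v!0 \<in> has_rat_solution_set then 1 else 0) [gc (v!0) (v!Suc 0)])"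
    by (rule rf_comp1[OF chi]) (auto intro!: rfI)
  then have c3: "rf (Suc (Suc 0)) (\<lambda>v. if gc (v!0) (v!Suc 0) \<in> has_rat_solution_set then 1 else 0)" by simp
  have R: "rf (Suc (Suc 0)) (\<lambda>v. if valid_code (v!0) \<and> (if gc (v!0) (v!Suc 0) \<in> has_rat_solution_set then 1 else 0) = (0::nat) then 0 else 1)"
    by (intro rf_if rp_and rp_valid rp_eq c3 rf_nth rf_const) auto
  show ?thesis
  proof (rule re_from_rf[OF R])
    fix k
    show "k \<in> fin_rat_solutions_set \<longleftrightarrow> (\<exists>j. (\<lambda>v. if valid_code (v!0) \<and> (if gc (v!0) (v!Suc 0) \<in> has_rat_solution_set then 1 else 0) = (0::nat) then 0 else 1) [k, j] = (0::nat))"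
      by (simp add: Fin_iff)
  qed
qed

lemma dirA: "re_set fin_rat_solutions_set \<Longrightarrow> recursive_set has_rat_solution_set"
proof -
  assume "re_set fin_rat_solutions_set"
  then obtain R where R: "rf (Suc (Suc 0)) R" and RF: "\<forall>k. k \<in> fin_rat_solutions_set \<longleftrightarrow> (\<exists>s. R [k, s] \<noteq> 0)"
    using rf_of_re by blast
  let ?F = "\<lambda>v. if \<not> valid_code (v!Suc 0) \<or> Wc (v!Suc 0) (v!0) \<or> R [fc (v!Suc 0), v!0] \<noteq> 0 then 0 else (1::nat)"
  have Rc: "rf (Suc (Suc 0)) (\<lambda>v. R [fc (v!Suc 0), v!0])"
    by (rule rf_comp2[OF R]) (auto intro!: rfI)
  have F: "rf (Suc (Suc 0)) ?F"
    by (intro rf_if rp_or rp_not rp_valid rp_Wc rp_eq Rc rf_nth rf_const) auto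
  have ex: "\<exists>s. ?F (s # ys) = 0" if ly: "length ys = Suc 0" for ys
  proof -
    obtain k where ys: "ys = [k]" using ly by (cases ys) auto
    show ?thesis
    proof (cases "valid_code k")
      case False then show ?thesis using ys by auto
    next
      case v: True
      show ?thesis
      proof (cases "k \<in> has_rat_solution_set")
        case True
        then obtain j where "Wc k j" using S_iff by blast
        then show ?thesis using ys by (intro exI[of _ j]) simp
      next
        case False
        then have "rat_solutions k = {}" using v by (simp add: has_rat_solution_set_def)
        then have "fc k \<in> fin_rat_solutions_set" using fc_Fin[OF v] by simp
        then obtain s where "R [fc k, s] \<noteq> 0" using RF by blast
        then show ?thesis using ys by (intro exI[of _ s]) simp
      qed
    qed
  qed
  have M: "rf (Suc 0) (\<lambda>ys. LEAST s. ?F (s # ys) = 0)" by (rule rf_mini[OF F ex])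
  have C: "rf (Suc 0) (\<lambda>v. if valid_code (v!0) \<and> Wc (v!0) (LEAST s. ?F (s # v) = 0) then 1 else 0)"
    by (intro rf_if rp_and rp_valid rp_Wc M rf_nth rf_const) auto
  have "rf (Suc 0) (\<lambda>v. if v!0 \<in> has_rat_solution_set then 1 else 0)"
  proof (rule rf_cong[OF C])
    fix v :: "nat list" assume lv: "length v = Suc 0"
    then obtain k where v: "v = [k]" by (cases v) auto
    let ?s = "LEAST s. ?F (s # v) = 0"
    have Fs: "?F (?s # v) = 0" by (rule LeastI_ex[OF ex[OF lv]])
    have "(valid_code k \<and> Wc k ?s) \<longleftrightarrow> k \<in> has_rat_solution_set"
    proof
      assume "valid_code k \<and> Wc k ?s"
      then show "k \<in> has_rat_solution_set" using S_iff by blast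
    next
      assume kS: "k \<in> has_rat_solution_set"
      then have vk: "valid_code k" by (simp add: has_rat_solution_set_def)
      have ne: "rat_solutions k \<noteq> {}" using kS by (simp add: has_rat_solution_set_def)
      have "Wc k ?s \<or> R [fc k, ?s] \<noteq> 0" using Fs vk v by (auto split: if_splits)
      moreover have "\<not> R [fc k, ?s] \<noteq> 0"
      proof
        assume "R [fc k, ?s] \<noteq> 0"
        then have "fc k \<in> fin_rat_solutions_set" using RF by blast
        then show False using fc_Fin[OF vk] ne by simp
      qed
      ultimately show "valid_code k \<and> Wc k ?s" using vk by blast
    qed
    then show "(if valid_code (v!0) \<and> Wc (v!0) ?s then 1 else 0) = (if v!0 \<in> has_rat_solution_set then 1 else 0)"
      using v by simp
  qed
  then show ?thesis by (simp add: recursive_iff)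
qed

theorem mainTheorem13:
  shows "recursive_set has_rat_solution_set \<longleftrightarrow> re_set fin_rat_solutions_set"
  using dirA dirB by blast


end
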